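(* Let $n\ge 3$. For the Grassmannian ${\rm Gr}(3,n)$, the block diagonal matching field polytope $P_{\mathcal{B}_2}$ can be obtained from $P_{\mathcal{B}_1}$ by a sequence of combinatorial mutations.
   Context: For $k=3$: for each $3$-subset $I=\{i_1<i_2<i_3\}$ of $[n]$ a matching field assigns $\sigma=\Lambda(I)\in S_3$; its polytope $P_\Lambda\subset\mathbb{R}^{3\times n}$ is the convex hull of the vectors $\sum_{r=1}^3 e_{\sigma(r),i_r}$ ($e_{i,j}$ the standard basis matrices). For $0\le\ell\le n$, the block diagonal matching field $\mathcal{B}_\ell$ has $\mathcal{B}_\ell(I)=\mathrm{id}$ if $|I\cap\{1,\dots,\ell\}|\ne1$ and $(12)$ otherwise. Combinatorial mutation: with $N\cong\mathbb{Z}^d$, $M$ its dual, $w\in M$ primitive and $F\subset w^\perp\subset N_\mathbb{R}$ a lattice polytope, the tropical map is $\varphi_{w,F}(u)=u-(\min_{f\in F}\langle f,u\rangle)w$; if $P\subset M_\mathbb{R}$ is a lattice polytope containing the origin and $\varphi_{w,F}(P)$ is convex, it is a combinatorial mutation of $P$. A sequence of combinatorial mutations is a finite chain of polytopes in which consecutive polytopes are related, after identification via lattice-preserving affine isomorphisms (unimodular equivalences) of the lattices they span, either by a unimodular equivalence or by a combinatorial mutation. *)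

theory Defs
  imports Complex_Main
begin

section \<open>Vectors of R^d as functions nat => real supported on {..<d}\<close>

definition vecs :: "nat \<Rightarrow> (nat \<Rightarrow> real) set" where
  "vecs d = {x. \<forall>i\<ge>d. x i = 0}"

definition lattice_vecs :: "nat \<Rightarrow> (nat \<Rightarrow> real) set" where
  "lattice_vecs d = {x \<in> vecs d. \<forall>i. x i \<in> \<int>}"

definition pairing :: "nat \<Rightarrow> (nat \<Rightarrow> real) \<Rightarrow> (nat \<Rightarrow> real) \<Rightarrow> real" where
  "pairing d f u = (\<Sum>i<d. f i * u i)"

definition conv_hull :: "(nat \<Rightarrow> real) set \<Rightarrow> (nat \<Rightarrow> real) set" where
  "conv_hull S = {x. \<exists>T c. finite T \<and> T \<noteq> {} \<and> T \<subseteq> S \<and> (\<forall>t\<in>T. 0 \<le> c t) \<and>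
       sum c T = 1 \<and> x = (\<lambda>i. \<Sum>t\<in>T. c t * t i)}"

definition conv_set :: "(nat \<Rightarrow> real) set \<Rightarrow> bool" where
  "conv_set Q \<longleftrightarrow> (\<forall>x\<in>Q. \<forall>y\<in>Q. \<forall>t::real. 0 \<le> t \<and> t \<le> 1 \<longrightarrow>
       (\<lambda>i. (1 - t) * x i + t * y i) \<in> Q)"

definition int_affine_hull :: "(nat \<Rightarrow> real) set \<Rightarrow> (nat \<Rightarrow> real) set" where
  "int_affine_hull S = {x. \<exists>T c. finite T \<and> T \<subseteq> S \<and> (\<forall>t\<in>T. c t \<in> \<int>) \<and>
       sum c T = 1 \<and> x = (\<lambda>i. \<Sum>t\<in>T. c t * t i)}"

definition lattice_polytope :: "nat \<Rightarrow> (nat \<Rightarrow> real) set \<Rightarrow> bool" where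
  "lattice_polytope d P \<longleftrightarrow>
     (\<exists>V. finite V \<and> V \<noteq> {} \<and> V \<subseteq> lattice_vecs d \<and> P = conv_hull V)"

definition spanned_lattice :: "nat \<Rightarrow> (nat \<Rightarrow> real) set \<Rightarrow> (nat \<Rightarrow> real) set" where
  "spanned_lattice d P = int_affine_hull (P \<inter> lattice_vecs d)"

definition affine_map :: "nat \<Rightarrow> nat \<Rightarrow> ((nat \<Rightarrow> real) \<Rightarrow> (nat \<Rightarrow> real)) \<Rightarrow> bool" where
  "affine_map d e f \<longleftrightarrow> (\<exists>A b. \<forall>x. f x = (\<lambda>j. if j < e then b j + (\<Sum>i<d. A j i * x i) else 0))"

definition unimod_equiv :: "nat \<Rightarrow> (nat \<Rightarrow> real) set \<Rightarrow> nat \<Rightarrow> (nat \<Rightarrow> real) set \<Rightarrow> bool" where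
  "unimod_equiv d P e Q \<longleftrightarrow> lattice_polytope d P \<and> lattice_polytope e Q \<and>
     (\<exists>f. affine_map d e f \<and> bij_betw f (spanned_lattice d P) (spanned_lattice e Q) \<and> f ` P = Q)"

definition primitive_vec :: "nat \<Rightarrow> (nat \<Rightarrow> real) \<Rightarrow> bool" where
  "primitive_vec d w \<longleftrightarrow> w \<in> lattice_vecs d \<and> w \<noteq> (\<lambda>_. 0) \<and>
     (\<forall>k::nat. \<forall>v\<in>lattice_vecs d. w = (\<lambda>i. real k * v i) \<longrightarrow> k = 1)"

definition trop_map :: "nat \<Rightarrow> (nat \<Rightarrow> real) \<Rightarrow> (nat \<Rightarrow> real) set \<Rightarrow> (nat \<Rightarrow> real) \<Rightarrow> (nat \<Rightarrow> real)" where
  "trop_map d w F u = (\<lambda>i. u i - (INF f\<in>F. pairing d f u) * w i)"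

text \<open>Combinatorial mutation in M = Z^d (N = Z^d with the standard pairing).\<close>
definition comb_mutation :: "nat \<Rightarrow> (nat \<Rightarrow> real) set \<Rightarrow> (nat \<Rightarrow> real) set \<Rightarrow> bool" where
  "comb_mutation d P Q \<longleftrightarrow> lattice_polytope d P \<and> (\<lambda>_. 0) \<in> P \<and>
     (\<exists>w F. primitive_vec d w \<and> lattice_polytope d F \<and> (\<forall>f\<in>F. pairing d f w = 0) \<and>
        Q = trop_map d w F ` P \<and> conv_set Q)"

definition mutation_step :: "nat \<Rightarrow> (nat \<Rightarrow> real) set \<Rightarrow> nat \<Rightarrow> (nat \<Rightarrow> real) set \<Rightarrow> bool" where
  "mutation_step d P e Q \<longleftrightarrow> unimod_equiv d P e Q \<or>
     (\<exists>k P' Q'. unimod_equiv d P k P' \<and> spanned_lattice k P' = lattice_vecs k \<and>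
        comb_mutation k P' Q' \<and> unimod_equiv k Q' e Q)"

definition mutation_related :: "nat \<times> (nat \<Rightarrow> real) set \<Rightarrow> nat \<times> (nat \<Rightarrow> real) set \<Rightarrow> bool" where
  "mutation_related a b \<longleftrightarrow>
     mutation_step (fst a) (snd a) (fst b) (snd b) \<or> mutation_step (fst b) (snd b) (fst a) (snd a)"

definition mutation_sequence :: "nat \<Rightarrow> (nat \<Rightarrow> real) set \<Rightarrow> nat \<Rightarrow> (nat \<Rightarrow> real) set \<Rightarrow> bool" where
  "mutation_sequence d P e Q \<longleftrightarrow> mutation_related\<^sup>*\<^sup>* (d, P) (e, Q)"

text \<open>R^{3 x n} identified with R^{3n}: entry (i,j), 1<=i<=3, 1<=j<=n, is coordinate (i-1)*n+(j-1).\<close>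
definition emat :: "nat \<Rightarrow> nat \<Rightarrow> nat \<Rightarrow> (nat \<Rightarrow> real)" where
  "emat n i j = (\<lambda>c. if c = (i - 1) * n + (j - 1) then 1 else 0)"

definition mf_vertex :: "nat \<Rightarrow> (nat \<Rightarrow> nat) \<Rightarrow> nat \<Rightarrow> nat \<Rightarrow> nat \<Rightarrow> (nat \<Rightarrow> real)" where
  "mf_vertex n \<sigma> a b c = (\<lambda>x. emat n (\<sigma> 1) a x + emat n (\<sigma> 2) b x + emat n (\<sigma> 3) c x)"

text \<open>A matching field assigns to each 3-subset of [n] a permutation of {1,2,3}.\<close>
definition mf_polytope :: "nat \<Rightarrow> (nat set \<Rightarrow> (nat \<Rightarrow> nat)) \<Rightarrow> (nat \<Rightarrow> real) set" where
  "mf_polytope n \<Lambda> = conv_hull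
     {mf_vertex n (\<Lambda> {a, b, c}) a b c | a b c. 1 \<le> a \<and> a < b \<and> b < c \<and> c \<le> n}"

definition swap12 :: "nat \<Rightarrow> nat" where
  "swap12 r = (if r = 1 then 2 else if r = 2 then 1 else r)"

definition block_diag :: "nat \<Rightarrow> nat set \<Rightarrow> (nat \<Rightarrow> nat)" where
  "block_diag l I = (if card (I \<inter> {1..l}) \<noteq> 1 then id else swap12)"

end

theory Submission
  imports Defs "HOL-Library.Function_Algebras" "HOL-Analysis.Convex" "HOL-Analysis.Line_Segment"
begin

instantiation "fun" :: (type, real_vector) real_vector
begin
definition scaleR_fun :: "real \<Rightarrow> ('a \<Rightarrow> 'b) \<Rightarrow> 'a \<Rightarrow> 'b" where
  "scaleR_fun r f = (\<lambda>x. r *\<^sub>R f x)"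
instance by standard (auto simp: scaleR_fun_def fun_eq_iff scaleR_add_right scaleR_add_left)
end

lemma scaleR_fun_apply[simp]: "(r *\<^sub>R f) x = r *\<^sub>R f x" by (simp add: scaleR_fun_def)

lemma sum_fun_apply: "(sum f T) x = (\<Sum>t\<in>T. f t x)"
  by (induction T rule: infinite_finite_induct) auto

lemma sum_scaleR_fun_apply: "(\<Sum>t\<in>T. c t *\<^sub>R (v t :: 'a \<Rightarrow> real)) x = (\<Sum>t\<in>T. c t * v t x)"
  by (simp add: sum_fun_apply)

lemma conv_hull_eq: "conv_hull S = convex hull S"
proof -
  have "(\<lambda>i. \<Sum>t\<in>T. c t * t i) = (\<Sum>t\<in>T. c t *\<^sub>R t)" for T :: "(nat \<Rightarrow> real) set" and c
    by (simp add: fun_eq_iff sum_scaleR_fun_apply)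
  then show ?thesis
    unfolding conv_hull_def convex_hull_explicit
    by (auto, metis, metis sum.empty zero_neq_one)
qed

lemma conv_set_convex: "convex Q \<Longrightarrow> conv_set Q"
  unfolding conv_set_def
proof (intro ballI allI impI)
  fix x y and t :: real assume "convex Q" "x \<in> Q" "y \<in> Q" "0 \<le> t \<and> t \<le> 1"
  then have "(1 - t) *\<^sub>R x + t *\<^sub>R y \<in> Q" by (simp add: convexD)
  moreover have "(1 - t) *\<^sub>R x + t *\<^sub>R y = (\<lambda>i. (1 - t) * x i + t * y i)" by (simp add: fun_eq_iff)
  ultimately show "(\<lambda>i. (1 - t) * x i + t * y i) \<in> Q" by simp
qed

definition iaff :: "nat \<Rightarrow> nat \<Rightarrow> ((nat \<Rightarrow> real) \<Rightarrow> (nat \<Rightarrow> real)) \<Rightarrow> bool" where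
  "iaff d e F \<longleftrightarrow> (\<exists>A b. (\<forall>a i. A a i \<in> \<int>) \<and> (\<forall>a. b a \<in> \<int>) \<and>
      (\<forall>x. F x = (\<lambda>a. if a < e then b a + (\<Sum>i<d. A a i * x i) else 0)))"

lemma iaff_affine: "iaff d e F \<Longrightarrow> affine_map d e F"
  unfolding iaff_def affine_map_def by blast

lemma iaff_AC:
  assumes "iaff d e F" "finite T" "sum c T = 1"
  shows "F (\<lambda>i. \<Sum>t\<in>T. c t * y t i) = (\<lambda>a. \<Sum>t\<in>T. c t * F (y t) a)"
proof -
  obtain A b where F: "\<And>x. F x = (\<lambda>a. if a < e then b a + (\<Sum>i<d. A a i * x i) else 0)"
    using assms(1) unfolding iaff_def by blast
  show ?thesis
  proof (rule ext)
    fix a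
    show "F (\<lambda>i. \<Sum>t\<in>T. c t * y t i) a = (\<Sum>t\<in>T. c t * F (y t) a)"
    proof (cases "a < e")
      case True
      have "(\<Sum>t\<in>T. c t * (b a + (\<Sum>i<d. A a i * y t i)))
          = (\<Sum>t\<in>T. c t) * b a + (\<Sum>t\<in>T. \<Sum>i<d. c t * (A a i * y t i))"
        by (simp only: distrib_left sum.distrib sum_distrib_left sum_distrib_right)
      also have "(\<Sum>t\<in>T. \<Sum>i<d. c t * (A a i * y t i)) = (\<Sum>i<d. \<Sum>t\<in>T. A a i * (c t * y t i))"
        by (subst sum.swap) (simp add: mult.left_commute)
      also have "\<dots> = (\<Sum>i<d. A a i * (\<Sum>t\<in>T. c t * y t i))"
        by (simp only: sum_distrib_left)
      also note assms(3)
      finally show ?thesis using True by (simp add: F add.commute)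
    qed (simp add: F)
  qed
qed

lemma iaff_AC_vec:
  assumes "iaff d e F" "finite T" "sum c T = 1"
  shows "F (\<Sum>t\<in>T. c t *\<^sub>R y t) = (\<Sum>t\<in>T. c t *\<^sub>R F (y t))"
proof -
  have "(\<Sum>t\<in>T. c t *\<^sub>R y t) = (\<lambda>i. \<Sum>t\<in>T. c t * y t i)"
    by (simp add: fun_eq_iff sum_scaleR_fun_apply)
  moreover have "(\<Sum>t\<in>T. c t *\<^sub>R F (y t)) = (\<lambda>a. \<Sum>t\<in>T. c t * F (y t) a)"
    by (simp add: fun_eq_iff sum_scaleR_fun_apply)
  ultimately show ?thesis using iaff_AC[OF assms] by simp
qed

lemma iaff_lattice:
  assumes "iaff d e F" "x \<in> lattice_vecs d"
  shows "F x \<in> lattice_vecs e"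
proof -
  obtain A b where A: "\<forall>a i. A a i \<in> \<int>" and b: "\<forall>a. b a \<in> \<int>"
    and F: "\<And>x. F x = (\<lambda>a. if a < e then b a + (\<Sum>i<d. A a i * x i) else 0)"
    using assms(1) unfolding iaff_def by blast
  have xi: "x i \<in> \<int>" for i using assms(2) unfolding lattice_vecs_def by auto
  show ?thesis
    unfolding lattice_vecs_def vecs_def
    using A b xi by (auto simp: F intro!: Ints_add Ints_sum Ints_mult)
qed

lemma iaff_image_hull:
  assumes "iaff d e F"
  shows "F ` (convex hull S) = convex hull (F ` S)"
proof -
  obtain A b where F: "\<And>x. F x = (\<lambda>a. if a < e then b a + (\<Sum>i<d. A a i * x i) else 0)"
    using assms(1) unfolding iaff_def by blast
  define c0 :: "nat \<Rightarrow> real" where "c0 = (\<lambda>a. if a < e then b a else 0)"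
  define Lin :: "(nat \<Rightarrow> real) \<Rightarrow> (nat \<Rightarrow> real)"
    where "Lin = (\<lambda>x a. if a < e then (\<Sum>i<d. A a i * x i) else 0)"
  have FL: "F = (\<lambda>x. c0 + x) \<circ> Lin"
    by (auto simp: fun_eq_iff F c0_def Lin_def)
  have lin: "linear Lin"
  proof (rule linearI)
    fix x y :: "nat \<Rightarrow> real" and r :: real
    show "Lin (x + y) = Lin x + Lin y"
      by (simp add: Lin_def fun_eq_iff distrib_left sum.distrib)
    show "Lin (r *\<^sub>R x) = r *\<^sub>R Lin x"
      by (simp add: Lin_def fun_eq_iff sum_distrib_left mult.left_commute)
  qed
  have "F ` (convex hull S) = (\<lambda>x. c0 + x) ` (Lin ` (convex hull S))"
    by (simp add: FL image_comp)
  also have "\<dots> = (\<lambda>x. c0 + x) ` (convex hull (Lin ` S))"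
    by (simp add: convex_hull_linear_image[OF lin])
  also have "\<dots> = convex hull ((\<lambda>x. c0 + x) ` Lin ` S)"
    by (simp add: convex_hull_translation)
  also have "\<dots> = convex hull (F ` S)" by (simp add: FL image_comp)
  finally show ?thesis .
qed

lemma iaff_conv_id:
  assumes "iaff d e F" "iaff e d G" "\<forall>v\<in>V. G (F v) = v" "x \<in> convex hull V"
  shows "G (F x) = x"
proof -
  obtain T u where T: "finite T" "T \<subseteq> V" "\<forall>t\<in>T. 0 \<le> u t" "sum u T = 1" "(\<Sum>t\<in>T. u t *\<^sub>R t) = x"
    using assms(4) unfolding convex_hull_explicit by blast
  have "G (F x) = G (\<Sum>t\<in>T. u t *\<^sub>R F t)"
    using iaff_AC_vec[OF assms(1) T(1) T(4), of id] T(5) by simp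
  also have "\<dots> = (\<Sum>t\<in>T. u t *\<^sub>R G (F t))"
    using iaff_AC_vec[OF assms(2) T(1) T(4), of F] by simp
  also have "\<dots> = x" using T(2,5) assms(3) by (auto intro!: sum.cong)
  finally show ?thesis .
qed

lemma IAH_base: "s \<in> S \<Longrightarrow> s \<in> int_affine_hull S"
  unfolding int_affine_hull_def
  by (rule CollectI, rule exI[of _ "{s}"], rule exI[of _ "\<lambda>_. 1"]) auto

lemma IAH_mono: "S \<subseteq> S' \<Longrightarrow> int_affine_hull S \<subseteq> int_affine_hull S'"
  unfolding int_affine_hull_def by blast

lemma IAH_comb:
  assumes "finite I" "\<forall>i\<in>I. c i \<in> \<int>" "sum c I = 1" "\<forall>i\<in>I. y i \<in> int_affine_hull S"
  shows "(\<lambda>l. \<Sum>i\<in>I. c i * y i l) \<in> int_affine_hull S"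
proof -
  have "\<forall>i\<in>I. \<exists>T d. finite T \<and> T \<subseteq> S \<and> (\<forall>t\<in>T. d t \<in> \<int>) \<and>
       sum d T = 1 \<and> y i = (\<lambda>l. \<Sum>t\<in>T. d t * t l)"
    using assms(4) unfolding int_affine_hull_def by blast
  then have "\<exists>T. \<forall>i\<in>I. \<exists>d. finite (T i) \<and> T i \<subseteq> S \<and> (\<forall>t\<in>T i. d t \<in> \<int>) \<and>
       sum d (T i) = 1 \<and> y i = (\<lambda>l. \<Sum>t\<in>T i. d t * t l)"
    by (rule bchoice)
  then obtain T where "\<forall>i\<in>I. \<exists>d. finite (T i) \<and> T i \<subseteq> S \<and> (\<forall>t\<in>T i. d t \<in> \<int>) \<and>
       sum d (T i) = 1 \<and> y i = (\<lambda>l. \<Sum>t\<in>T i. d t * t l)" ..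
  then have "\<exists>d. \<forall>i\<in>I. finite (T i) \<and> T i \<subseteq> S \<and> (\<forall>t\<in>T i. d i t \<in> \<int>) \<and>
       sum (d i) (T i) = 1 \<and> y i = (\<lambda>l. \<Sum>t\<in>T i. d i t * t l)"
    by (rule bchoice)
  then obtain d where Td: "\<forall>i\<in>I. finite (T i) \<and> T i \<subseteq> S \<and> (\<forall>t\<in>T i. d i t \<in> \<int>) \<and>
       sum (d i) (T i) = 1 \<and> y i = (\<lambda>l. \<Sum>t\<in>T i. d i t * t l)" ..
  define U where "U = (\<Union>i\<in>I. T i)"
  define e where "e s = (\<Sum>i\<in>I. c i * (if s \<in> T i then d i s else 0))" for s
  have fT: "finite (T i)" "T i \<subseteq> S" "\<forall>t\<in>T i. d i t \<in> \<int>" "sum (d i) (T i) = 1"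
      "y i = (\<lambda>l. \<Sum>t\<in>T i. d i t * t l)" if "i \<in> I" for i
    using Td that by auto
  have fU: "finite U" using fT(1) assms(1) unfolding U_def by auto
  have US: "U \<subseteq> S" using fT(2) unfolding U_def by auto
  have TU: "T i \<subseteq> U" if "i \<in> I" for i using that unfolding U_def by auto
  have restr: "(\<Sum>s\<in>U. (if s \<in> T i then g s else 0)) = (\<Sum>s\<in>T i. g s)" if "i \<in> I" for i and g :: "_ \<Rightarrow> real"
    using sum.inter_restrict[OF fU, of g "T i"] TU[OF that] by (simp add: Int_absorb1)
  have eint: "\<forall>s\<in>U. e s \<in> \<int>"
    unfolding e_def using assms(2) fT(3) by (auto intro!: Ints_sum Ints_mult)
  have esum: "sum e U = 1"
  proof -
    have "sum e U = (\<Sum>i\<in>I. c i * (\<Sum>s\<in>U. (if s \<in> T i then d i s else 0)))"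
      unfolding e_def sum_distrib_left by (rule sum.swap)
    also have "\<dots> = (\<Sum>i\<in>I. c i)"
      by (rule sum.cong) (auto simp: restr fT(4))
    finally show ?thesis using assms(3) by simp
  qed
  have eval: "(\<lambda>l. \<Sum>i\<in>I. c i * y i l) = (\<lambda>l. \<Sum>s\<in>U. e s * s l)"
  proof (rule ext)
    fix l
    have "(\<Sum>s\<in>U. e s * s l) = (\<Sum>i\<in>I. c i * (\<Sum>s\<in>U. (if s \<in> T i then d i s * s l else 0)))"
    proof -
      have "(\<Sum>s\<in>U. e s * s l) = (\<Sum>s\<in>U. \<Sum>i\<in>I. c i * (if s \<in> T i then d i s * s l else 0))"
        unfolding e_def sum_distrib_right by (intro sum.cong refl) (simp add: mult.assoc)
      also have "\<dots> = (\<Sum>i\<in>I. \<Sum>s\<in>U. c i * (if s \<in> T i then d i s * s l else 0))"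
        by (rule sum.swap)
      finally show ?thesis by (simp only: sum_distrib_left)
    qed
    also have "\<dots> = (\<Sum>i\<in>I. c i * y i l)"
      by (rule sum.cong) (auto simp: restr fT(5))
    finally show "(\<Sum>i\<in>I. c i * y i l) = (\<Sum>s\<in>U. e s * s l)" by simp
  qed
  show ?thesis unfolding eval int_affine_hull_def using fU US eint esum by blast
qed

lemma IAH_image:
  assumes "iaff d e F" "\<forall>s\<in>S. F s \<in> S2" "x \<in> int_affine_hull S"
  shows "F x \<in> int_affine_hull S2"
proof -
  obtain T c where T: "finite T" "T \<subseteq> S" "\<forall>t\<in>T. c t \<in> \<int>" "sum c T = 1" "x = (\<lambda>i. \<Sum>t\<in>T. c t * t i)"
    using assms(3) unfolding int_affine_hull_def by blast
  have "F x = (\<lambda>a. \<Sum>t\<in>T. c t * F t a)"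
    using iaff_AC[OF assms(1) T(1) T(4), of id] T(5) by simp
  moreover have "(\<lambda>a. \<Sum>t\<in>T. c t * F t a) \<in> int_affine_hull S2"
    using T assms(2) by (intro IAH_comb) (auto intro: IAH_base)
  ultimately show ?thesis by simp
qed

lemma IAH_id:
  assumes "iaff d e F" "iaff e d G" "\<forall>s\<in>S. G (F s) = s" "x \<in> int_affine_hull S"
  shows "G (F x) = x"
proof -
  obtain T c where T: "finite T" "T \<subseteq> S" "\<forall>t\<in>T. c t \<in> \<int>" "sum c T = 1" "x = (\<lambda>i. \<Sum>t\<in>T. c t * t i)"
    using assms(4) unfolding int_affine_hull_def by blast
  have "G (F x) = G (\<lambda>a. \<Sum>t\<in>T. c t * F t a)"
    using iaff_AC[OF assms(1) T(1) T(4), of id] T(5) by simp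
  also have "\<dots> = (\<lambda>a. \<Sum>t\<in>T. c t * G (F t) a)"
    using iaff_AC[OF assms(2) T(1) T(4), of F] by simp
  also have "\<dots> = x" using T(2,5) assms(3) by (auto intro!: sum.cong ext)
  finally show ?thesis .
qed

lemma unimod_A:
  assumes fin: "finite V" and ne: "V \<noteq> {}" and lat: "V \<subseteq> lattice_vecs d"
    and F: "iaff d e F" and G: "iaff e d G" and GF: "\<forall>v\<in>V. G (F v) = v"
  shows "unimod_equiv d (convex hull V) e (convex hull (F ` V))"
proof -
  let ?P1 = "convex hull V" and ?P2 = "convex hull (F ` V)"
  have latF: "F ` V \<subseteq> lattice_vecs e" using lat iaff_lattice[OF F] by auto
  have lp1: "lattice_polytope d ?P1"
    unfolding lattice_polytope_def conv_hull_eq using fin ne lat by blast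
  have lp2: "lattice_polytope e ?P2"
    unfolding lattice_polytope_def conv_hull_eq using fin ne latF by blast
  have img: "F ` ?P1 = ?P2" by (rule iaff_image_hull[OF F])
  have GFV: "(G \<circ> F) ` V = V" using GF by (force simp: image_iff)
  have imgG: "G ` ?P2 = ?P1"
    using iaff_image_hull[OF G, of "F ` V"] GFV by (simp add: image_comp)
  have GF1: "\<forall>x\<in>?P1. G (F x) = x" using iaff_conv_id[OF F G GF] by blast
  have FG2: "\<forall>y\<in>?P2. F (G y) = y"
    using iaff_conv_id[OF G F, of "F ` V"] GF by auto
  have Fl: "\<forall>s\<in>?P1 \<inter> lattice_vecs d. F s \<in> ?P2 \<inter> lattice_vecs e"
    using img iaff_lattice[OF F] by blast
  have Gl: "\<forall>s\<in>?P2 \<inter> lattice_vecs e. G s \<in> ?P1 \<inter> lattice_vecs d"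
    using imgG iaff_lattice[OF G] by blast
  have "bij_betw F (spanned_lattice d ?P1) (spanned_lattice e ?P2)"
    unfolding spanned_lattice_def
  proof (rule bij_betw_byWitness[where f'=G])
    show "\<forall>a\<in>int_affine_hull (?P1 \<inter> lattice_vecs d). G (F a) = a"
      using IAH_id[OF F G] GF1 by blast
    show "\<forall>a'\<in>int_affine_hull (?P2 \<inter> lattice_vecs e). F (G a') = a'"
      using IAH_id[OF G F] FG2 by blast
    show "F ` int_affine_hull (?P1 \<inter> lattice_vecs d) \<subseteq> int_affine_hull (?P2 \<inter> lattice_vecs e)"
      using IAH_image[OF F Fl] by blast
    show "G ` int_affine_hull (?P2 \<inter> lattice_vecs e) \<subseteq> int_affine_hull (?P1 \<inter> lattice_vecs d)"
      using IAH_image[OF G Gl] by blast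
  qed
  then show ?thesis
    unfolding unimod_equiv_def using lp1 lp2 img iaff_affine[OF F] by blast
qed

lemma pairing_linear: "linear (pairing k f)"
proof (rule linearI)
  fix x y :: "nat \<Rightarrow> real" and r :: real
  show "pairing k f (x + y) = pairing k f x + pairing k f y"
    by (simp add: pairing_def distrib_left sum.distrib)
  show "pairing k f (r *\<^sub>R x) = r *\<^sub>R pairing k f x"
    by (simp add: pairing_def sum_distrib_left mult.left_commute)
qed

lemma split_hull:
  fixes V :: "(nat \<Rightarrow> real) set" and L :: "(nat \<Rightarrow> real) \<Rightarrow> real"
  assumes fin: "finite V" and lin: "linear L" and vals: "\<forall>v\<in>V. L v \<in> {-1,0,1}"
    and x: "x \<in> convex hull V" and pos: "0 \<le> L x"
  shows "x \<in> convex hull ({v\<in>V. 0 \<le> L v} \<union> {(1/2) *\<^sub>R (p + q) | p q. p \<in> V \<and> q \<in> V \<and> L p = 1 \<and> L q = -1})"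
proof -
  define M where "M = {(1/2) *\<^sub>R (p + q) | p q. p \<in> V \<and> q \<in> V \<and> L p = 1 \<and> L q = -1}"
  define S where "S = {v\<in>V. 0 \<le> L v} \<union> M"
  define B where "B = convex hull S"
  obtain u where u0: "\<forall>v\<in>V. 0 \<le> u v" and u1: "sum u V = 1" and ux: "(\<Sum>v\<in>V. u v *\<^sub>R v) = x"
    using x unfolding convex_hull_finite[OF fin] by blast
  define Vp where "Vp = {v\<in>V. L v = 1}"
  define Vn where "Vn = {v\<in>V. L v = -1}"
  define Vz where "Vz = {v\<in>V. L v = 0}"
  have finp: "finite Vp" "finite Vn" "finite Vz" using fin by (auto simp: Vp_def Vn_def Vz_def)
  have Vu: "V = (Vz \<union> Vp) \<union> Vn" using vals by (auto simp: Vp_def Vn_def Vz_def)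
  have d1: "Vz \<inter> Vp = {}" "(Vz \<union> Vp) \<inter> Vn = {}" by (auto simp: Vp_def Vn_def Vz_def)
  have sumsplit: "sum g V = sum g Vz + sum g Vp + sum g Vn" for g :: "_ \<Rightarrow> 'b::comm_monoid_add"
    by (subst Vu, subst sum.union_disjoint, use finp d1 in auto, subst sum.union_disjoint, use finp d1 in auto)
  define Pm where "Pm = sum u Vp"
  define N where "N = sum u Vn"
  define Z where "Z = sum u Vz"
  have S1: "Z + Pm + N = 1" using u1 sumsplit[of u] by (simp add: Z_def Pm_def N_def)
  have Lx: "L x = (\<Sum>v\<in>V. u v * L v)"
    using ux[symmetric] by (simp add: linear_sum[OF lin] linear_scale[OF lin])
  also have "\<dots> = (\<Sum>v\<in>Vz. u v * L v) + (\<Sum>v\<in>Vp. u v * L v) + (\<Sum>v\<in>Vn. u v * L v)"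
    by (rule sumsplit)
  also have "\<dots> = Pm - N"
    by (simp add: Pm_def N_def Vz_def Vp_def Vn_def sum_negf)
  finally have LxPN: "L x = Pm - N" .
  have N0: "0 \<le> N" unfolding N_def using u0 by (auto simp: Vn_def intro: sum_nonneg)
  have Z0: "0 \<le> Z" unfolding Z_def using u0 by (auto simp: Vz_def intro: sum_nonneg)
  have SB: "S \<subseteq> B" unfolding B_def by (rule hull_subset)
  have cB: "convex B" unfolding B_def by simp
  show ?thesis
  proof (cases "N = 0")
    case True
    have un0: "\<forall>v\<in>Vn. u v = 0"
      using True sum_nonneg_eq_0_iff[OF finp(2), of u] u0 by (auto simp: N_def Vn_def)
    have "x = (\<Sum>v\<in>Vz \<union> Vp. u v *\<^sub>R v)"
    proof -
      have xz: "x = (\<Sum>v\<in>Vz. u v *\<^sub>R v) + (\<Sum>v\<in>Vp. u v *\<^sub>R v) + (\<Sum>v\<in>Vn. u v *\<^sub>R v)"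
        using ux sumsplit[of "\<lambda>v. u v *\<^sub>R v"] by simp
      have "(\<Sum>v\<in>Vn. u v *\<^sub>R v) = 0" using un0 by simp
      then have "x = (\<Sum>v\<in>Vz. u v *\<^sub>R v) + (\<Sum>v\<in>Vp. u v *\<^sub>R v)" using xz by simp
      then show ?thesis using finp d1 by (simp add: sum.union_disjoint)
    qed
    moreover have "(\<Sum>v\<in>Vz \<union> Vp. u v *\<^sub>R v) \<in> B"
    proof (rule convex_sum[OF _ cB])
      show "finite (Vz \<union> Vp)" using finp by simp
      show "sum u (Vz \<union> Vp) = 1" using S1 True finp d1 by (simp add: sum.union_disjoint Z_def Pm_def)
      show "\<And>i. i \<in> Vz \<union> Vp \<Longrightarrow> 0 \<le> u i" using u0 by (auto simp: Vz_def Vp_def)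
      show "\<And>i. i \<in> Vz \<union> Vp \<Longrightarrow> i \<in> B" using SB by (auto simp: S_def Vz_def Vp_def)
    qed
    ultimately show ?thesis unfolding B_def S_def M_def by simp
  next
    case False
    then have Npos: "0 < N" using N0 by simp
    then have Ppos: "0 < Pm" and NP: "N \<le> Pm" using LxPN pos by auto
    define sz where "sz = (\<Sum>v\<in>Vz. u v *\<^sub>R v)"
    define sp where "sp = (\<Sum>v\<in>Vp. u v *\<^sub>R v)"
    define sn where "sn = (\<Sum>v\<in>Vn. u v *\<^sub>R v)"
    have xs: "x = sz + sp + sn" using ux sumsplit[of "\<lambda>v. u v *\<^sub>R v"] by (simp add: sz_def sp_def sn_def)
    define yp where "yp = (1 / Pm) *\<^sub>R sp"
    define yn where "yn = (1 / N) *\<^sub>R sn"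
    define m where "m = (1/2) *\<^sub>R (yp + yn)"
    have yp: "yp \<in> convex hull Vp"
    proof -
      have "yp = (\<Sum>v\<in>Vp. (u v / Pm) *\<^sub>R v)" by (simp add: yp_def sp_def scaleR_sum_right)
      also have "\<dots> \<in> convex hull Vp"
      proof (rule convex_sum)
        show "finite Vp" by (rule finp)
        show "convex (convex hull Vp)" by simp
        show "(\<Sum>v\<in>Vp. u v / Pm) = 1" using Ppos by (simp add: Pm_def sum_divide_distrib[symmetric])
        show "\<And>i. i \<in> Vp \<Longrightarrow> 0 \<le> u i / Pm" using u0 Ppos by (auto simp: Vp_def)
        show "\<And>i. i \<in> Vp \<Longrightarrow> i \<in> convex hull Vp" by (rule hull_inc)
      qed
      finally show ?thesis .
    qed
    have yn: "yn \<in> convex hull Vn"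
    proof -
      have "yn = (\<Sum>v\<in>Vn. (u v / N) *\<^sub>R v)" by (simp add: yn_def sn_def scaleR_sum_right)
      also have "\<dots> \<in> convex hull Vn"
      proof (rule convex_sum)
        show "finite Vn" by (rule finp)
        show "convex (convex hull Vn)" by simp
        show "(\<Sum>v\<in>Vn. u v / N) = 1" using Npos by (simp add: N_def sum_divide_distrib[symmetric])
        show "\<And>i. i \<in> Vn \<Longrightarrow> 0 \<le> u i / N" using u0 Npos by (auto simp: Vn_def)
        show "\<And>i. i \<in> Vn \<Longrightarrow> i \<in> convex hull Vn" by (rule hull_inc)
      qed
      finally show ?thesis .
    qed
    have Meq: "M = (\<lambda>z. (1/2) *\<^sub>R z) ` (Vp + Vn)"
      unfolding M_def Vp_def Vn_def set_plus_def by auto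
    have "m \<in> (\<lambda>z. (1/2) *\<^sub>R z) ` (convex hull Vp + convex hull Vn)"
      unfolding m_def using yp yn by (intro imageI set_plus_intro)
    also have "\<dots> = convex hull M"
      by (simp add: Meq convex_hull_scaling convex_hull_set_plus)
    also have "\<dots> \<subseteq> B" unfolding B_def S_def by (intro hull_mono) auto
    finally have mB: "m \<in> B" .
    define c where "c v = (if v \<in> Vp then u v * (1 - N / Pm) else u v)" for v
    define I where "I = Some ` (Vz \<union> Vp) \<union> {None}"
    define a where "a i = (case i of None \<Rightarrow> 2 * N | Some v \<Rightarrow> c v)" for i
    define y where "y i = (case i of None \<Rightarrow> m | Some v \<Rightarrow> v)" for i
    have sumI: "sum g I = g None + (\<Sum>v\<in>Vz \<union> Vp. g (Some v))" for g :: "_ \<Rightarrow> 'b::comm_monoid_add"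
    proof -
      have "sum g I = g None + sum g (Some ` (Vz \<union> Vp))"
        unfolding I_def using finp by (subst sum.union_disjoint) (auto simp: add.commute)
      also have "sum g (Some ` (Vz \<union> Vp)) = (\<Sum>v\<in>Vz \<union> Vp. g (Some v))"
        by (subst sum.reindex) auto
      finally show ?thesis .
    qed
    have sumc: "(\<Sum>v\<in>Vz \<union> Vp. c v) = Z + Pm * (1 - N / Pm)"
    proof -
      have "(\<Sum>v\<in>Vz \<union> Vp. c v) = (\<Sum>v\<in>Vz. c v) + (\<Sum>v\<in>Vp. c v)"
        using finp d1 by (simp add: sum.union_disjoint)
      also have "(\<Sum>v\<in>Vz. c v) = Z" unfolding Z_def c_def using d1 by (intro sum.cong) auto
      also have "(\<Sum>v\<in>Vp. c v) = Pm * (1 - N / Pm)"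
        unfolding Pm_def c_def by (simp add: sum_distrib_right)
      finally show ?thesis .
    qed
    have sumcv: "(\<Sum>v\<in>Vz \<union> Vp. c v *\<^sub>R v) = sz + (1 - N / Pm) *\<^sub>R sp"
    proof -
      have "(\<Sum>v\<in>Vz \<union> Vp. c v *\<^sub>R v) = (\<Sum>v\<in>Vz. c v *\<^sub>R v) + (\<Sum>v\<in>Vp. c v *\<^sub>R v)"
        using finp d1 by (simp add: sum.union_disjoint)
      also have "(\<Sum>v\<in>Vz. c v *\<^sub>R v) = sz" unfolding sz_def c_def using d1 by (intro sum.cong) auto
      also have "(\<Sum>v\<in>Vp. c v *\<^sub>R v) = (1 - N / Pm) *\<^sub>R sp"
        unfolding sp_def c_def by (simp add: scaleR_sum_right mult.commute)
      finally show ?thesis .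
    qed
    have "x = (\<Sum>i\<in>I. a i *\<^sub>R y i)"
    proof -
      have e1: "(\<Sum>i\<in>I. a i *\<^sub>R y i) = (2 * N) *\<^sub>R m + (\<Sum>v\<in>Vz \<union> Vp. c v *\<^sub>R v)"
        by (simp add: sumI a_def y_def)
      have e2: "(2 * N) *\<^sub>R m = (N / Pm) *\<^sub>R sp + sn"
        using Npos Ppos by (simp add: m_def yp_def yn_def scaleR_add_right)
      have e3a: "(N / Pm) *\<^sub>R sp + (1 - N / Pm) *\<^sub>R sp = sp"
        by (simp flip: scaleR_add_left)
      have e3: "(N / Pm) *\<^sub>R sp + sn + (sz + (1 - N / Pm) *\<^sub>R sp) = x"
      proof -
        have "(N / Pm) *\<^sub>R sp + sn + (sz + (1 - N / Pm) *\<^sub>R sp)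
            = sz + ((N / Pm) *\<^sub>R sp + (1 - N / Pm) *\<^sub>R sp) + sn"
          by (simp only: add_ac)
        then show ?thesis using e3a xs by simp
      qed
      show ?thesis using e1 e2 e3 sumcv by simp
    qed
    moreover have "(\<Sum>i\<in>I. a i *\<^sub>R y i) \<in> B"
    proof (rule convex_sum[OF _ cB])
      show "finite I" unfolding I_def using finp by simp
      show "sum a I = 1"
      proof -
        have "sum a I = 2 * N + (\<Sum>v\<in>Vz \<union> Vp. c v)" using sumI[of a] by (simp add: a_def)
        also have "\<dots> = 2 * N + Z + Pm * (1 - N / Pm)" using sumc by simp
        also have "Pm * (1 - N / Pm) = Pm - N" using Ppos by (simp add: field_simps)
        finally show ?thesis using S1 by simp
      qed
      show "0 \<le> a i" if "i \<in> I" for i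
      proof -
        have "0 \<le> 1 - N / Pm" using NP Ppos by simp
        then show ?thesis using that u0 N0 unfolding I_def a_def c_def
          by (auto simp: Vz_def Vp_def)
      qed
      show "y i \<in> B" if "i \<in> I" for i
        using that mB SB unfolding I_def y_def S_def by (auto simp: Vz_def Vp_def)
    qed
    ultimately show ?thesis unfolding B_def S_def M_def by simp
  qed
qed

lemma mut_half:
  fixes V :: "(nat \<Rightarrow> real) set" and L :: "(nat \<Rightarrow> real) \<Rightarrow> real" and w :: "nat \<Rightarrow> real"
  assumes fin: "finite V" and lin: "linear L" and Lw: "L w = 0"
    and vals: "\<forall>v\<in>V. L v \<in> {-1,0,1}"
    and C1: "\<forall>p\<in>V. \<forall>q\<in>V. L p = 1 \<longrightarrow> L q = -1 \<longrightarrow>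
               (1/2) *\<^sub>R (p + q) \<in> convex hull ((\<lambda>u. u - min 0 (L u) *\<^sub>R w) ` V)"
  shows "(\<lambda>u. u - min 0 (L u) *\<^sub>R w) ` (convex hull V) \<subseteq> convex hull ((\<lambda>u. u - min 0 (L u) *\<^sub>R w) ` V)"
proof
  define \<phi> where "\<phi> = (\<lambda>u. u - min 0 (L u) *\<^sub>R w)"
  define A where "A = convex hull (\<phi> ` V)"
  define M where "M = {(1/2) *\<^sub>R (p + q) | p q. p \<in> V \<and> q \<in> V \<and> L p = 1 \<and> L q = -1}"
  have cA: "convex A" unfolding A_def by simp
  have MA: "M \<subseteq> A" using C1 unfolding M_def A_def \<phi>_def by blast
  have VA: "\<phi> ` V \<subseteq> A" unfolding A_def by (rule hull_subset)
  fix z assume "z \<in> \<phi> ` (convex hull V)"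
  then obtain x where x: "x \<in> convex hull V" and z: "z = \<phi> x" unfolding \<phi>_def by blast
  show "z \<in> A"
  proof (cases "0 \<le> L x")
    case True
    then have zx: "z = x" by (simp add: z \<phi>_def)
    have "x \<in> convex hull ({v\<in>V. 0 \<le> L v} \<union> M)"
      using split_hull[OF fin lin vals x True] unfolding M_def .
    moreover have "{v\<in>V. 0 \<le> L v} \<union> M \<subseteq> A"
    proof -
      have "{v\<in>V. 0 \<le> L v} \<subseteq> \<phi> ` V"
      proof
        fix v assume "v \<in> {v\<in>V. 0 \<le> L v}"
        then have "v \<in> V" "\<phi> v = v" by (auto simp: \<phi>_def)
        then show "v \<in> \<phi> ` V" by (metis imageI)
      qed
      then show ?thesis using VA MA by blast
    qed
    ultimately show ?thesis using zx cA by (metis hull_minimal subsetD)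
  next
    case False
    define L' where "L' = (\<lambda>u. - L u)"
    have lin': "linear L'" unfolding L'_def using lin by (simp add: linear_compose_neg)
    have vals': "\<forall>v\<in>V. L' v \<in> {-1,0,1}" using vals by (auto simp: L'_def)
    have "x \<in> convex hull ({v\<in>V. 0 \<le> L' v} \<union> {(1/2) *\<^sub>R (p + q) | p q. p \<in> V \<and> q \<in> V \<and> L' p = 1 \<and> L' q = -1})"
      using split_hull[OF fin lin' vals' x] False by (simp add: L'_def)
    moreover have "{(1/2) *\<^sub>R (p + q) | p q. p \<in> V \<and> q \<in> V \<and> L' p = 1 \<and> L' q = -1} \<subseteq> M"
    proof
      fix z assume "z \<in> {(1/2) *\<^sub>R (p + q) | p q. p \<in> V \<and> q \<in> V \<and> L' p = 1 \<and> L' q = -1}"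
      then obtain p q where pq: "z = (1/2) *\<^sub>R (p + q)" "p \<in> V" "q \<in> V" "L' p = 1" "L' q = -1"
        by blast
      have "z = (1/2) *\<^sub>R (q + p)" using pq(1) by (simp only: add.commute)
      moreover have "L q = 1" "L p = -1" using pq(4,5) unfolding L'_def by simp_all
      ultimately show "z \<in> M" unfolding M_def using pq(2,3) by blast
    qed
    moreover have "{v\<in>V. 0 \<le> L' v} = {v\<in>V. L v \<le> 0}" unfolding L'_def by simp
    ultimately have xS: "x \<in> convex hull ({v\<in>V. L v \<le> 0} \<union> M)"
      by (metis (no_types, lifting) Un_mono hull_mono subsetD subset_refl)
    define Lin where "Lin = (\<lambda>u. u - L u *\<^sub>R w)"
    have linL: "linear Lin"
    proof (rule linearI)
      fix a b :: "nat \<Rightarrow> real" and r :: real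
      show "Lin (a + b) = Lin a + Lin b"
        by (simp add: Lin_def linear_add[OF lin] scaleR_add_left)
      show "Lin (r *\<^sub>R a) = r *\<^sub>R Lin a"
        by (simp add: Lin_def linear_scale[OF lin] scaleR_diff_right)
    qed
    have zL: "z = Lin x" using False by (simp add: z \<phi>_def Lin_def)
    have "Lin ` ({v\<in>V. L v \<le> 0} \<union> M) \<subseteq> A"
    proof
      fix y assume "y \<in> Lin ` ({v\<in>V. L v \<le> 0} \<union> M)"
      then obtain t where t: "t \<in> {v\<in>V. L v \<le> 0} \<union> M" and y: "y = Lin t" by blast
      show "y \<in> A"
      proof (cases "t \<in> M")
        case True
        then obtain p q where "t = (1/2) *\<^sub>R (p + q)" "L p = 1" "L q = -1" unfolding M_def by blast
        then have "L t = 0" by (simp add: linear_scale[OF lin] linear_add[OF lin])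
        then have "y = t" by (simp add: y Lin_def)
        then show ?thesis using True MA by blast
      next
        case False
        then have "t \<in> V" "L t \<le> 0" using t by auto
        then have "y = \<phi> t" by (simp add: y Lin_def \<phi>_def)
        then show ?thesis using \<open>t \<in> V\<close> VA by blast
      qed
    qed
    then have "convex hull (Lin ` ({v\<in>V. L v \<le> 0} \<union> M)) \<subseteq> A"
      using cA by (simp add: hull_minimal)
    moreover have "z \<in> convex hull (Lin ` ({v\<in>V. L v \<le> 0} \<union> M))"
      using xS zL convex_hull_linear_image[OF linL] by blast
    ultimately show ?thesis by blast
  qed
qed

lemma mut_hull:
  fixes V :: "(nat \<Rightarrow> real) set" and L :: "(nat \<Rightarrow> real) \<Rightarrow> real" and w :: "nat \<Rightarrow> real"
  assumes fin: "finite V" and lin: "linear L" and Lw: "L w = 0"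
    and vals: "\<forall>v\<in>V. L v \<in> {-1,0,1}"
    and C1: "\<forall>p\<in>V. \<forall>q\<in>V. L p = 1 \<longrightarrow> L q = -1 \<longrightarrow>
               (1/2) *\<^sub>R (p + q) \<in> convex hull ((\<lambda>u. u - min 0 (L u) *\<^sub>R w) ` V)"
    and C2: "\<forall>p\<in>V. \<forall>q\<in>V. L p = 1 \<longrightarrow> L q = -1 \<longrightarrow>
               (1/2) *\<^sub>R (p + (q - min 0 (L q) *\<^sub>R w)) \<in> convex hull V"
  shows "(\<lambda>u. u - min 0 (L u) *\<^sub>R w) ` (convex hull V) = convex hull ((\<lambda>u. u - min 0 (L u) *\<^sub>R w) ` V)"
proof
  define \<phi> where "\<phi> = (\<lambda>u. u - min 0 (L u) *\<^sub>R w)"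
  define \<psi> where "\<psi> = (\<lambda>u. u - min 0 (L u) *\<^sub>R (- w))"
  show "\<phi> ` (convex hull V) \<subseteq> convex hull (\<phi> ` V)"
    using mut_half[OF fin lin Lw vals C1] unfolding \<phi>_def .
  have Lphi: "L (\<phi> u) = L u" for u
    by (simp add: \<phi>_def linear_diff[OF lin] linear_scale[OF lin] Lw)
  have Lpsi: "L (\<psi> u) = L u" for u
    by (simp add: \<psi>_def linear_add[OF lin] linear_scale[OF lin] Lw)
  have psiphi: "\<psi> (\<phi> u) = u" for u by (simp add: \<psi>_def Lphi) (simp add: \<phi>_def)
  have phipsi: "\<phi> (\<psi> u) = u" for u by (simp add: \<phi>_def Lpsi) (simp add: \<psi>_def)
  have psiV: "\<psi> ` (\<phi> ` V) = V" by (simp add: image_comp psiphi comp_def)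
  have "\<psi> ` (convex hull (\<phi> ` V)) \<subseteq> convex hull (\<psi> ` (\<phi> ` V))"
    unfolding \<psi>_def
  proof (rule mut_half)
    show "finite (\<phi> ` V)" using fin by simp
    show "linear L" by (rule lin)
    show "L (- w) = 0" using Lw linear_neg[OF lin] by simp
    show "\<forall>v\<in>\<phi> ` V. L v \<in> {-1,0,1}" using vals Lphi by auto
    show "\<forall>p\<in>\<phi> ` V. \<forall>q\<in>\<phi> ` V. L p = 1 \<longrightarrow> L q = -1 \<longrightarrow>
        (1/2) *\<^sub>R (p + q) \<in> convex hull ((\<lambda>u. u - min 0 (L u) *\<^sub>R (- w)) ` \<phi> ` V)"
    proof (intro ballI impI)
      fix p' q' assume p': "p' \<in> \<phi> ` V" and q': "q' \<in> \<phi> ` V" and Lp: "L p' = 1" and Lq: "L q' = -1"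
      obtain p q where pq: "p \<in> V" "q \<in> V" "p' = \<phi> p" "q' = \<phi> q" using p' q' by blast
      have "L p = 1" "L q = -1" using Lp Lq pq Lphi by auto
      then have "p' = p" using pq by (simp add: \<phi>_def)
      moreover have "(1/2) *\<^sub>R (p + \<phi> q) \<in> convex hull V"
        using C2 pq \<open>L p = 1\<close> \<open>L q = -1\<close> unfolding \<phi>_def by blast
      ultimately show "(1/2) *\<^sub>R (p' + q') \<in> convex hull ((\<lambda>u. u - min 0 (L u) *\<^sub>R (- w)) ` \<phi> ` V)"
        using pq psiV unfolding \<psi>_def by simp
    qed
  qed
  then have sub: "\<psi> ` (convex hull (\<phi> ` V)) \<subseteq> convex hull V" using psiV by simp
  show "convex hull (\<phi> ` V) \<subseteq> \<phi> ` (convex hull V)"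
  proof
    fix y assume "y \<in> convex hull (\<phi> ` V)"
    then have "\<psi> y \<in> convex hull V" using sub by blast
    then show "y \<in> \<phi> ` (convex hull V)" using phipsi by (metis imageI)
  qed
qed

lemma trop_seg:
  "trop_map k w (conv_hull {0, f}) u = u - min 0 (pairing k f u) *\<^sub>R w"
proof -
  have seg: "conv_hull {0, f} = (\<lambda>t. t *\<^sub>R f) ` {0..1}"
  proof -
    have "conv_hull {0, f} = {t *\<^sub>R f | t. 0 \<le> t \<and> t \<le> 1}"
      unfolding conv_hull_eq segment_convex_hull[symmetric] closed_segment_def by simp
    also have "\<dots> = (\<lambda>t. t *\<^sub>R f) ` {0..1}" by (auto simp: image_def)
    finally show ?thesis .
  qed
  have "(INF g\<in>conv_hull {0, f}. pairing k g u) = min 0 (pairing k f u)"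
  proof -
    have pt: "pairing k (t *\<^sub>R f) u = t * pairing k f u" for t
      by (simp add: pairing_def sum_distrib_left mult.assoc)
    have im: "(\<lambda>g. pairing k g u) ` conv_hull {0, f} = (\<lambda>t. t * pairing k f u) ` {0..1}"
      unfolding seg image_image pt ..
    show ?thesis unfolding im
    proof (rule cInf_eq_minimum)
      let ?a = "pairing k f u"
      show "min 0 ?a \<in> (\<lambda>t. t * ?a) ` {0..1}"
      proof (cases "0 \<le> ?a")
        case True
        then have "min 0 ?a = 0 * ?a" by simp
        then show ?thesis by (intro image_eqI[of _ _ 0]) auto
      next
        case False
        then have "min 0 ?a = 1 * ?a" by simp
        then show ?thesis by (intro image_eqI[of _ _ 1]) auto
      qed
      fix x assume "x \<in> (\<lambda>t. t * ?a) ` {0..1}"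
      then obtain t where t01: "t \<in> {0..1}" and x: "x = t * ?a" by (rule imageE)
      have t: "0 \<le> t" "t \<le> 1" using t01 by simp_all
      show "min 0 ?a \<le> x"
      proof (cases "0 \<le> ?a")
        case True
        then have "0 \<le> t * ?a" using t by simp
        then show ?thesis using x by linarith
      next
        case False
        then have "(1 - t) * ?a \<le> 0" using t by (intro mult_nonneg_nonpos) auto
        then have "?a \<le> t * ?a" by (simp add: left_diff_distrib)
        then show ?thesis using x by linarith
      qed
    qed
  qed
  then show ?thesis unfolding trop_map_def by (simp add: fun_eq_iff)
qed

lemma seg_hull: "conv_hull {0, f} = (\<lambda>t. t *\<^sub>R f) ` {0..1}"
proof -
  have "conv_hull {0, f} = {t *\<^sub>R f | t. 0 \<le> t \<and> t \<le> 1}"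
    unfolding conv_hull_eq segment_convex_hull[symmetric] closed_segment_def by simp
  also have "\<dots> = (\<lambda>t. t *\<^sub>R f) ` {0..1}" by (auto simp: image_def)
  finally show ?thesis .
qed

lemma comb_mut_intro:
  fixes V :: "(nat \<Rightarrow> real) set"
  assumes fin: "finite V" and ne: "V \<noteq> {}" and lat: "V \<subseteq> lattice_vecs k" and orig: "(\<lambda>_. 0) \<in> V"
    and flat: "f \<in> lattice_vecs k" and wlat: "w \<in> lattice_vecs k" and wi: "w i0 = 1"
    and fw: "pairing k f w = 0"
    and vals: "\<forall>v\<in>V. pairing k f v \<in> {-1,0,1}"
    and C1: "\<forall>p\<in>V. \<forall>q\<in>V. pairing k f p = 1 \<longrightarrow> pairing k f q = -1 \<longrightarrow>
               (1/2) *\<^sub>R (p + q) \<in> convex hull ((\<lambda>u. u - min 0 (pairing k f u) *\<^sub>R w) ` V)"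
    and C2: "\<forall>p\<in>V. \<forall>q\<in>V. pairing k f p = 1 \<longrightarrow> pairing k f q = -1 \<longrightarrow>
               (1/2) *\<^sub>R (p + (q - min 0 (pairing k f q) *\<^sub>R w)) \<in> convex hull V"
  shows "comb_mutation k (convex hull V) (convex hull ((\<lambda>u. u - min 0 (pairing k f u) *\<^sub>R w) ` V))"
proof -
  define F where "F = conv_hull {0, f}"
  have lp: "lattice_polytope k (convex hull V)"
    unfolding lattice_polytope_def conv_hull_eq using fin ne lat by (intro exI[of _ V]) simp
  have o: "(\<lambda>_. 0) \<in> convex hull V" by (rule hull_inc[OF orig])
  have prim: "primitive_vec k w"
    unfolding primitive_vec_def
  proof (intro conjI allI ballI impI)
    show "w \<in> lattice_vecs k" by (rule wlat)
    show "w \<noteq> (\<lambda>_. 0)" using wi by (metis zero_neq_one)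
    fix kk :: nat and v assume v: "v \<in> lattice_vecs k" and eq: "w = (\<lambda>i. real kk * v i)"
    have "v i0 \<in> \<int>" using v unfolding lattice_vecs_def by auto
    then obtain z where z: "v i0 = of_int z" by (auto elim: Ints_cases)
    have "real kk * of_int z = 1" using wi eq z by simp
    then have "int kk * z = 1" by (metis of_int_eq_1_iff of_int_mult of_int_of_nat_eq)
    then have "int kk = 1" using pos_zmult_eq_1_iff[of "int kk" z] by (cases "kk = 0") auto
    then show "kk = 1" by simp
  qed
  have lpF: "lattice_polytope k F"
    unfolding lattice_polytope_def F_def
  proof (intro exI conjI)
    show "finite {0, f}" by simp
    show "{0, f} \<noteq> {}" by simp
    show "{0, f} \<subseteq> lattice_vecs k" using flat by (auto simp: lattice_vecs_def vecs_def)
  qed simp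
  have Fw: "\<forall>g\<in>F. pairing k g w = 0"
  proof
    fix g assume "g \<in> F"
    then obtain t where "g = t *\<^sub>R f"
      unfolding F_def seg_hull by auto
    then show "pairing k g w = 0" using fw by (simp add: pairing_def sum_distrib_left[symmetric] mult.assoc)
  qed
  have Q: "convex hull ((\<lambda>u. u - min 0 (pairing k f u) *\<^sub>R w) ` V) = trop_map k w F ` (convex hull V)"
  proof -
    have "trop_map k w F = (\<lambda>u. u - min 0 (pairing k f u) *\<^sub>R w)"
      unfolding F_def by (rule ext) (rule trop_seg)
    then show ?thesis
      using mut_hull[OF fin pairing_linear _ vals C1 C2] fw by simp
  qed
  have cs: "conv_set (convex hull ((\<lambda>u. u - min 0 (pairing k f u) *\<^sub>R w) ` V))"
    by (rule conv_set_convex) simp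
  show ?thesis
    unfolding comb_mutation_def
    apply (rule conjI, rule lp, rule conjI, rule o)
    apply (rule exI[of _ w], rule exI[of _ F])
    using prim lpF Fw Q cs by simp
qed

definition idx :: "nat \<Rightarrow> nat \<Rightarrow> nat \<Rightarrow> nat" where
  "idx n r c = (r - 1) * n + (c - 1)"

lemma emat_idx: "emat n r c = (\<lambda>x. if x = idx n r c then 1 else 0)"
  by (simp add: emat_def idx_def)

lemma idx_lt:
  assumes "1 \<le> r" "r \<le> 3" "1 \<le> c" "c \<le> n"
  shows "idx n r c < 3 * n"
proof -
  have "(r - 1) * n \<le> 2 * n" using assms(2) by (intro mult_le_mono1) simp
  then show ?thesis unfolding idx_def using assms(3,4) by linarith
qed

lemma idx_divmod:
  assumes "1 \<le> c" "c \<le> n"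
  shows "idx n r c div n = r - 1" "idx n r c mod n = c - 1"
proof -
  have n: "0 < n" using assms by simp
  have cl: "c - 1 < n" using assms by simp
  show "idx n r c div n = r - 1" unfolding idx_def using n cl
    by (simp add: add.commute[of "(r - 1) * n"] div_mult_self2 del: div_mult_self1)
  show "idx n r c mod n = c - 1" unfolding idx_def using n cl
    by (simp add: add.commute[of "(r - 1) * n"])
qed

lemma idx_inj:
  assumes "1 \<le> c" "c \<le> n" "1 \<le> c'" "c' \<le> n" "1 \<le> r" "1 \<le> r'"
  shows "idx n r c = idx n r' c' \<longleftrightarrow> r = r' \<and> c = c'"
proof
  assume eq: "idx n r c = idx n r' c'"
  have r1: "r - 1 = r' - 1"
    using idx_divmod(1)[OF assms(1,2), of r] idx_divmod(1)[OF assms(3,4), of r'] eq by metis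
  have c1: "c - 1 = c' - 1"
    using idx_divmod(2)[OF assms(1,2), of r] idx_divmod(2)[OF assms(3,4), of r'] eq by metis
  show "r = r' \<and> c = c'" using r1 c1 assms(1,3,5,6) by linarith
qed simp

definition E :: "nat \<Rightarrow> nat \<times> nat \<times> nat \<Rightarrow> (nat \<Rightarrow> real)" where
  "E n t = emat n 1 (fst t) + emat n 2 (fst (snd t)) + emat n 3 (snd (snd t))"

lemma E_at:
  assumes "1 \<le> a" "a \<le> n" "1 \<le> b" "b \<le> n" "1 \<le> c" "c \<le> n" "1 \<le> x" "x \<le> n"
  shows "E n (a, b, c) (idx n 1 x) = (if a = x then 1 else 0)"
    "E n (a, b, c) (idx n 2 x) = (if b = x then 1 else 0)"
    "E n (a, b, c) (idx n 3 x) = (if c = x then 1 else 0)"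
  using assms by (auto simp: E_def emat_idx idx_inj)

lemma emat_lat:
  assumes "1 \<le> r" "r \<le> 3" "1 \<le> c" "c \<le> n"
  shows "emat n r c \<in> lattice_vecs (3 * n)"
  using idx_lt[OF assms] unfolding lattice_vecs_def vecs_def emat_idx by auto

lemma lattice_vecs_add: "x \<in> lattice_vecs d \<Longrightarrow> y \<in> lattice_vecs d \<Longrightarrow> x + y \<in> lattice_vecs d"
  unfolding lattice_vecs_def vecs_def by auto

lemma lattice_vecs_diff: "x \<in> lattice_vecs d \<Longrightarrow> y \<in> lattice_vecs d \<Longrightarrow> x - y \<in> lattice_vecs d"
  unfolding lattice_vecs_def vecs_def by auto

lemma E_lat:
  assumes "1 \<le> a" "a \<le> n" "1 \<le> b" "b \<le> n" "1 \<le> c" "c \<le> n"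
  shows "E n (a, b, c) \<in> lattice_vecs (3 * n)"
  unfolding E_def using assms by (auto intro!: lattice_vecs_add emat_lat)

definition inX :: "nat \<Rightarrow> nat \<Rightarrow> nat \<Rightarrow> nat \<Rightarrow> nat \<Rightarrow> bool" where
  "inX n j a b c \<longleftrightarrow>
     (a = 2 \<and> b = 1 \<and> 3 \<le> c \<and> c \<le> n) \<or>
     (3 \<le> a \<and> b = 1 \<and> a < c \<and> c \<le> n) \<or>
     (3 \<le> a \<and> a < j \<and> b = 2 \<and> a < c \<and> c \<le> n) \<or>
     (a = 2 \<and> 3 \<le> b \<and> j \<le> b \<and> b < c \<and> c \<le> n) \<or>
     (3 \<le> a \<and> a < b \<and> b < c \<and> c \<le> n)"

definition Xs :: "nat \<Rightarrow> nat \<Rightarrow> (nat \<times> nat \<times> nat) set" where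
  "Xs n j = {(a, b, c). inX n j a b c}"

definition inB2 :: "nat \<Rightarrow> nat \<Rightarrow> nat \<Rightarrow> nat \<Rightarrow> bool" where
  "inB2 n a b c \<longleftrightarrow>
     (a = 1 \<and> b = 2 \<and> 3 \<le> c \<and> c \<le> n) \<or>
     (3 \<le> a \<and> b = 1 \<and> a < c \<and> c \<le> n) \<or>
     (3 \<le> a \<and> b = 2 \<and> a < c \<and> c \<le> n) \<or>
     (3 \<le> a \<and> a < b \<and> b < c \<and> c \<le> n)"

definition B2s :: "nat \<Rightarrow> (nat \<times> nat \<times> nat) set" where
  "B2s n = {(a, b, c). inB2 n a b c}"

lemma Xs_mem: "(a, b, c) \<in> Xs n j \<longleftrightarrow> inX n j a b c" by (simp add: Xs_def)
lemma B2s_mem: "(a, b, c) \<in> B2s n \<longleftrightarrow> inB2 n a b c" by (simp add: B2s_def)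

lemma inX_range: "inX n j a b c \<Longrightarrow> 2 \<le> a \<and> a < n \<and> 1 \<le> b \<and> b < n \<and> 3 \<le> c \<and> c \<le> n \<and> b \<noteq> a"
  unfolding inX_def by auto

lemma inB2_range: "inB2 n a b c \<Longrightarrow> 1 \<le> a \<and> a < n \<and> 1 \<le> b \<and> b < n \<and> 3 \<le> c \<and> c \<le> n"
  unfolding inB2_def by auto

lemma Xs_finite: "finite (Xs n j)"
proof -
  have "Xs n j \<subseteq> {..n} \<times> {..n} \<times> {..n}"
    using inX_range unfolding Xs_def by fastforce
  then show ?thesis by (rule finite_subset) simp
qed

lemma B2s_finite: "finite (B2s n)"
proof -
  have "B2s n \<subseteq> {..n} \<times> {..n} \<times> {..n}"
    using inB2_range unfolding B2s_def by fastforce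
  then show ?thesis by (rule finite_subset) simp
qed

definition mv :: "nat \<Rightarrow> nat \<times> nat \<times> nat \<Rightarrow> nat \<times> nat \<times> nat" where
  "mv j t = (if fst t = 2 \<and> fst (snd t) = j then (j, 2, snd (snd t)) else t)"

definition mvL :: "nat \<times> nat \<times> nat \<Rightarrow> nat \<times> nat \<times> nat" where
  "mvL t = (if fst t = 2 \<and> fst (snd t) = 1 then (1, 2, snd (snd t)) else t)"

lemma Xs_step:
  assumes "3 \<le> j"
  shows "Xs n (Suc j) = mv j ` Xs n j"
proof (intro set_eqI iffI)
  fix x assume x: "x \<in> Xs n (Suc j)"
  obtain a b c where abc: "x = (a, b, c)" by (cases x)
  show "x \<in> mv j ` Xs n j"
  proof (cases "a = j \<and> b = 2")
    case True
    have "(2, j, c) \<in> Xs n j" using x abc True assms by (auto simp: Xs_mem inX_def)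
    moreover have "mv j (2, j, c) = x" using abc True by (simp add: mv_def)
    ultimately show ?thesis by (metis imageI)
  next
    case False
    have "x \<in> Xs n j" using x abc False assms by (auto simp: Xs_mem inX_def)
    moreover have "mv j x = x" using x abc False assms by (auto simp: mv_def Xs_mem inX_def)
    ultimately show ?thesis by (metis imageI)
  qed
next
  fix x assume "x \<in> mv j ` Xs n j"
  then obtain y where y: "y \<in> Xs n j" and x: "x = mv j y" by blast
  obtain a b c where abc: "y = (a, b, c)" by (cases y)
  show "x \<in> Xs n (Suc j)"
  proof (cases "a = 2 \<and> b = j")
    case True
    then show ?thesis using x y abc assms by (auto simp: mv_def Xs_mem inX_def)
  next
    case False
    then show ?thesis using x y abc assms by (auto simp: mv_def Xs_mem inX_def)
  qed
qed

lemma B2s_step: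
  shows "B2s n = mvL ` Xs n n"
proof (intro set_eqI iffI)
  fix x assume x: "x \<in> B2s n"
  obtain a b c where abc: "x = (a, b, c)" by (cases x)
  show "x \<in> mvL ` Xs n n"
  proof (cases "a = 1")
    case True
    have "(2, 1, c) \<in> Xs n n" using x abc True by (auto simp: Xs_mem inX_def B2s_mem inB2_def)
    moreover have "mvL (2, 1, c) = x" using x abc True by (auto simp: mvL_def B2s_mem inB2_def)
    ultimately show ?thesis by (metis imageI)
  next
    case False
    have "x \<in> Xs n n" using x abc False by (auto simp: Xs_mem inX_def B2s_mem inB2_def)
    moreover have "mvL x = x" using x abc False by (auto simp: mvL_def B2s_mem inB2_def)
    ultimately show ?thesis by (metis imageI)
  qed
next
  fix x assume "x \<in> mvL ` Xs n n"
  then obtain y where y: "y \<in> Xs n n" and x: "x = mvL y" by blast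
  obtain a b c where abc: "y = (a, b, c)" by (cases y)
  have iX: "inX n n a b c" using y abc by (simp add: Xs_mem)
  show "x \<in> B2s n"
  proof (cases "a = 2 \<and> b = 1")
    case True
    then have "x = (1, 2, c)" using x abc by (simp add: mvL_def)
    moreover have "3 \<le> c \<and> c \<le> n" using iX True unfolding inX_def by auto
    ultimately show ?thesis by (simp add: B2s_mem inB2_def)
  next
    case False
    then have "x = (a, b, c)" using x abc by (simp add: mvL_def)
    moreover have "inB2 n a b c" using iX False unfolding inX_def inB2_def by auto
    ultimately show ?thesis by (simp add: B2s_mem)
  qed
qed

lemma card_inter1:
  fixes a b c :: nat
  assumes "1 \<le> a" "a < b" "b < c"
  shows "card ({a, b, c} \<inter> {1..1}) = (if a = 1 then 1 else 0)"
proof (cases "a = 1")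
  case True
  have eq: "{a, b, c} \<inter> {1..1} = {1}"
  proof (intro set_eqI iffI)
    fix x assume "x \<in> {a, b, c} \<inter> {1..1}" then show "x \<in> {1}" by auto
  next
    fix x assume "x \<in> {1::nat}" then show "x \<in> {a, b, c} \<inter> {1..1}" using True by simp
  qed
  show ?thesis unfolding eq using True by simp
next
  case False
  have eq: "{a, b, c} \<inter> {1..1} = {}"
  proof (intro set_eqI iffI)
    fix x assume x: "x \<in> {a, b, c} \<inter> {1..1}"
    then have "x = 1" by auto
    then show "x \<in> {}" using x False assms by auto
  qed simp
  show ?thesis unfolding eq using False by simp
qed

lemma card_inter2:
  fixes a b c :: nat
  assumes "1 \<le> a" "a < b" "b < c"
  shows "card ({a, b, c} \<inter> {1..2}) = (if a = 1 \<and> b = 2 then 2 else if a = 1 \<or> a = 2 then 1 else 0)"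
proof -
  have two: "{1..2::nat} = {1, 2}" by auto
  consider "a = 1 \<and> b = 2" | "a = 1 \<and> b \<noteq> 2" | "a = 2" | "3 \<le> a" using assms by linarith
  then show ?thesis
  proof cases
    case 1
    then have eq: "{a, b, c} \<inter> {1..2} = {1, 2}" using assms unfolding two by auto
    show ?thesis unfolding eq using 1 by simp
  next
    case 2
    then have eq: "{a, b, c} \<inter> {1..2} = {1}" using assms unfolding two by auto
    show ?thesis unfolding eq using 2 by simp
  next
    case 3
    then have eq: "{a, b, c} \<inter> {1..2} = {2}" using assms unfolding two by auto
    show ?thesis unfolding eq using 3 by simp
  next
    case 4
    then have eq: "{a, b, c} \<inter> {1..2} = {}" using assms unfolding two by auto
    show ?thesis unfolding eq using 4 by simp
  qed
qed

lemma mf_vertex_id: "mf_vertex n id a b c = E n (a, b, c)"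
  by (simp add: mf_vertex_def E_def fun_eq_iff)

lemma mf_vertex_swap: "mf_vertex n swap12 a b c = E n (b, a, c)"
  by (simp add: mf_vertex_def E_def fun_eq_iff swap12_def)

lemma vert1:
  assumes "1 \<le> a" "a < b" "b < c"
  shows "mf_vertex n (block_diag 1 {a, b, c}) a b c = (if a = 1 then E n (b, a, c) else E n (a, b, c))"
  using card_inter1[OF assms] by (simp add: block_diag_def mf_vertex_id mf_vertex_swap)

lemma vert2:
  assumes "1 \<le> a" "a < b" "b < c"
  shows "mf_vertex n (block_diag 2 {a, b, c}) a b c =
    (if (a = 1 \<and> b \<noteq> 2) \<or> a = 2 then E n (b, a, c) else E n (a, b, c))"
  using card_inter2[OF assms] by (auto simp: block_diag_def mf_vertex_id mf_vertex_swap)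

lemma memI_vert:
  assumes "x = mf_vertex n (L {a, b, c}) a b c" "1 \<le> a \<and> a < b \<and> b < c \<and> c \<le> n"
  shows "x \<in> {mf_vertex n (L {a, b, c}) a b c |a b c. 1 \<le> a \<and> a < b \<and> b < c \<and> c \<le> n}"
  using assms by blast

lemma mf_B1: "mf_polytope n (block_diag 1) = convex hull (E n ` Xs n 3)"
proof -
  have "{mf_vertex n (block_diag 1 {a, b, c}) a b c |a b c. 1 \<le> a \<and> a < b \<and> b < c \<and> c \<le> n}
       = E n ` Xs n 3"
  proof (intro set_eqI iffI)
    fix x assume "x \<in> {mf_vertex n (block_diag 1 {a, b, c}) a b c |a b c. 1 \<le> a \<and> a < b \<and> b < c \<and> c \<le> n}"
    then obtain a b c where abc: "1 \<le> a" "a < b" "b < c" "c \<le> n"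
      and x: "x = mf_vertex n (block_diag 1 {a, b, c}) a b c" by blast
    show "x \<in> E n ` Xs n 3"
    proof (cases "a = 1")
      case True
      have "x = E n (b, a, c)" using x unfolding vert1[OF abc(1-3)] if_P[OF True] .
      moreover have "(b, a, c) \<in> Xs n 3" using abc True by (auto simp: Xs_mem inX_def)
      ultimately show ?thesis by (rule image_eqI)
    next
      case False
      have "x = E n (a, b, c)" using x unfolding vert1[OF abc(1-3)] if_not_P[OF False] .
      moreover have "(a, b, c) \<in> Xs n 3" using abc False by (auto simp: Xs_mem inX_def)
      ultimately show ?thesis by (rule image_eqI)
    qed
  next
    fix x assume "x \<in> E n ` Xs n 3"
    then obtain t where t: "t \<in> Xs n 3" and x: "x = E n t" by blast
    obtain a b c where abc: "t = (a, b, c)" by (cases t)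
    have iX: "inX n 3 a b c" using t abc by (simp add: Xs_mem)
    show "x \<in> {mf_vertex n (block_diag 1 {a, b, c}) a b c |a b c. 1 \<le> a \<and> a < b \<and> b < c \<and> c \<le> n}"
    proof (cases "b = 1")
      case True
      have cond: "1 \<le> b \<and> b < a \<and> a < c \<and> c \<le> n" using iX True by (auto simp: inX_def)
      then have "mf_vertex n (block_diag 1 {b, a, c}) b a c = E n (a, b, c)"
        using True by (subst vert1) auto
      then have "x = mf_vertex n (block_diag 1 {b, a, c}) b a c" using x abc by simp
      then show ?thesis using cond by (rule memI_vert)
    next
      case False
      have cond: "1 \<le> a \<and> a < b \<and> b < c \<and> c \<le> n" using iX False by (auto simp: inX_def)
      moreover have "a \<noteq> 1" using iX by (auto simp: inX_def)
      ultimately have "mf_vertex n (block_diag 1 {a, b, c}) a b c = E n (a, b, c)"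
        by (subst vert1) auto
      then have "x = mf_vertex n (block_diag 1 {a, b, c}) a b c" using x abc by simp
      then show ?thesis using cond by (rule memI_vert)
    qed
  qed
  then show ?thesis unfolding mf_polytope_def conv_hull_eq by simp
qed

lemma mf_B2: "mf_polytope n (block_diag 2) = convex hull (E n ` B2s n)"
proof -
  have "{mf_vertex n (block_diag 2 {a, b, c}) a b c |a b c. 1 \<le> a \<and> a < b \<and> b < c \<and> c \<le> n}
       = E n ` B2s n"
  proof (intro set_eqI iffI)
    fix x assume "x \<in> {mf_vertex n (block_diag 2 {a, b, c}) a b c |a b c. 1 \<le> a \<and> a < b \<and> b < c \<and> c \<le> n}"
    then obtain a b c where abc: "1 \<le> a" "a < b" "b < c" "c \<le> n"
      and x: "x = mf_vertex n (block_diag 2 {a, b, c}) a b c" by blast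
    show "x \<in> E n ` B2s n"
    proof (cases "(a = 1 \<and> b \<noteq> 2) \<or> a = 2")
      case True
      have "x = E n (b, a, c)" using x unfolding vert2[OF abc(1-3)] if_P[OF True] .
      moreover have "(b, a, c) \<in> B2s n" using abc True unfolding B2s_mem inB2_def by auto
      ultimately show ?thesis by (rule image_eqI)
    next
      case False
      have "x = E n (a, b, c)" using x unfolding vert2[OF abc(1-3)] if_not_P[OF False] .
      moreover have "(a, b, c) \<in> B2s n" using abc False unfolding B2s_mem inB2_def by auto
      ultimately show ?thesis by (rule image_eqI)
    qed
  next
    fix x assume "x \<in> E n ` B2s n"
    then obtain t where t: "t \<in> B2s n" and x: "x = E n t" by blast
    obtain a b c where abc: "t = (a, b, c)" by (cases t)
    have iB: "inB2 n a b c" using t abc by (simp add: B2s_mem)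
    show "x \<in> {mf_vertex n (block_diag 2 {a, b, c}) a b c |a b c. 1 \<le> a \<and> a < b \<and> b < c \<and> c \<le> n}"
    proof (cases "a \<ge> 3 \<and> b \<le> 2")
      case True
      have cond: "1 \<le> b \<and> b < a \<and> a < c \<and> c \<le> n" using iB True by (auto simp: inB2_def)
      moreover have cnd: "(b = 1 \<and> a \<noteq> 2) \<or> b = 2" using cond True by auto
      ultimately have "mf_vertex n (block_diag 2 {b, a, c}) b a c = E n (a, b, c)"
        by (subst vert2) auto
      then have "x = mf_vertex n (block_diag 2 {b, a, c}) b a c" using x abc by simp
      then show ?thesis using cond by (rule memI_vert)
    next
      case False
      have cond: "1 \<le> a \<and> a < b \<and> b < c \<and> c \<le> n" using iB False by (auto simp: inB2_def)
      moreover have "\<not> ((a = 1 \<and> b \<noteq> 2) \<or> a = 2)" using iB False by (auto simp: inB2_def)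
      ultimately have "mf_vertex n (block_diag 2 {a, b, c}) a b c = E n (a, b, c)"
        by (subst vert2) auto
      then have "x = mf_vertex n (block_diag 2 {a, b, c}) a b c" using x abc by simp
      then show ?thesis using cond by (rule memI_vert)
    qed
  qed
  then show ?thesis unfolding mf_polytope_def conv_hull_eq by simp
qed

definition shr :: "nat \<Rightarrow> nat \<Rightarrow> (nat \<Rightarrow> real) \<Rightarrow> (nat \<Rightarrow> real) \<Rightarrow> (nat \<Rightarrow> real)" where
  "shr d i0 W x = (\<lambda>a. if a < d then x a + x i0 * W a else 0)"

lemma shr_iaff:
  assumes "i0 < d" "\<forall>a. W a \<in> \<int>"
  shows "iaff d d (shr d i0 W)"
  unfolding iaff_def
proof (intro exI conjI allI)
  define A where "A = (\<lambda>a i. (if i = a then 1 else 0) + (if i = i0 then W a else 0) :: real)"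
  show "A a i \<in> \<int>" for a i using assms(2) by (auto simp: A_def)
  show "(\<lambda>_. 0::real) a \<in> \<int>" for a by simp
  show "shr d i0 W x = (\<lambda>a. if a < d then (\<lambda>_. 0) a + (\<Sum>i<d. A a i * x i) else 0)" for x
  proof (rule ext)
    fix a
    show "shr d i0 W x a = (if a < d then (\<lambda>_. 0) a + (\<Sum>i<d. A a i * x i) else 0)"
    proof (cases "a < d")
      case True
      have "(\<Sum>i<d. A a i * x i) = (\<Sum>i<d. (if i = a then x i else 0) + (if i = i0 then W a * x i else 0))"
        by (rule sum.cong) (auto simp: A_def algebra_simps)
      also have "\<dots> = x a + W a * x i0" using True assms(1) by (simp add: sum.distrib)
      finally show ?thesis using True by (simp add: shr_def mult.commute)
    qed (simp add: shr_def)
  qed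
qed

lemma lattice_vecs_vecs: "x \<in> lattice_vecs d \<Longrightarrow> x \<in> vecs d"
  unfolding lattice_vecs_def by simp

lemma shr_vec: "x \<in> vecs d \<Longrightarrow> W \<in> vecs d \<Longrightarrow> shr d i0 W x = x + x i0 *\<^sub>R W"
  unfolding shr_def vecs_def by (auto simp: fun_eq_iff)

lemma shear_unimod:
  assumes "finite V" "V \<noteq> {}" "V \<subseteq> lattice_vecs d" "i0 < d" "i1 < d" "\<forall>a. W a \<in> \<int>"
    "\<forall>v\<in>V. shr d i1 (-W) (shr d i0 W v) = v"
  shows "unimod_equiv d (convex hull V) d (convex hull (shr d i0 W ` V))"
proof (rule unimod_A[OF assms(1-3) shr_iaff[OF assms(4,6)] shr_iaff[OF assms(5)]])
  show "\<forall>a. (- W) a \<in> \<int>" using assms(6) by simp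
  show "\<forall>v\<in>V. shr d i1 (- W) (shr d i0 W v) = v" by (rule assms(7))
qed

definition Wc :: "nat \<Rightarrow> nat \<Rightarrow> (nat \<Rightarrow> real)" where
  "Wc n j = emat n 1 j - emat n 2 j + emat n 2 2 - emat n 1 2"

lemma E_move: "E n (2, j, c) + Wc n j = E n (j, 2, c)"
  by (simp add: fun_eq_iff E_def Wc_def algebra_simps)

lemma E_move': "E n (j, 2, c) - Wc n j = E n (2, j, c)"
  using E_move[of n j c] by (metis add_diff_cancel)

lemma Wc_lat:
  assumes "1 \<le> j" "j \<le> n" "2 \<le> n"
  shows "Wc n j \<in> lattice_vecs (3 * n)"
  unfolding Wc_def using assms
  by (intro lattice_vecs_add lattice_vecs_diff emat_lat) auto

lemma Wc_int: "Wc n j a \<in> \<int>"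
  by (simp add: Wc_def emat_def)

lemma move_shear:
  fixes X :: "(nat \<times> nat \<times> nat) set"
  assumes fin: "finite X" and ne: "X \<noteq> {}" and lat: "\<forall>t\<in>X. E n t \<in> lattice_vecs (3 * n)"
    and glat: "\<forall>t\<in>X. E n (g t) \<in> lattice_vecs (3 * n)"
    and i0: "i0 < 3 * n" and i1: "i1 < 3 * n"
    and Wint: "\<forall>a. W a \<in> \<int>" and Wvec: "W \<in> vecs (3 * n)"
    and fwd: "\<forall>t\<in>X. E n t + (E n t i0) *\<^sub>R W = E n (g t)"
    and bwd: "\<forall>t\<in>X. E n (g t) - (E n (g t) i1) *\<^sub>R W = E n t"
  shows "unimod_equiv (3 * n) (convex hull (E n ` X)) (3 * n) (convex hull (E n ` g ` X))"
proof -
  have shr1: "shr (3 * n) i0 W (E n t) = E n (g t)" if "t \<in> X" for t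
    using shr_vec[OF lattice_vecs_vecs Wvec] lat fwd that by simp
  have img: "shr (3 * n) i0 W ` E n ` X = E n ` g ` X"
    by (simp add: image_image shr1 cong: image_cong)
  have inv: "\<forall>v\<in>E n ` X. shr (3 * n) i1 (-W) (shr (3 * n) i0 W v) = v"
  proof
    fix v assume "v \<in> E n ` X"
    then obtain t where t: "t \<in> X" and v: "v = E n t" by blast
    have mW: "- W \<in> vecs (3 * n)" using Wvec unfolding vecs_def by simp
    have "shr (3 * n) i1 (-W) (E n (g t)) = E n (g t) + (E n (g t) i1) *\<^sub>R (- W)"
      using shr_vec[OF lattice_vecs_vecs mW] glat t by simp
    also have "\<dots> = E n t" using bwd t by simp
    finally show "shr (3 * n) i1 (-W) (shr (3 * n) i0 W v) = v" using shr1[OF t] v by simp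
  qed
  have "unimod_equiv (3 * n) (convex hull (E n ` X)) (3 * n) (convex hull (shr (3 * n) i0 W ` E n ` X))"
    by (rule shear_unimod) (use fin ne lat i0 i1 Wint inv in auto)
  then show ?thesis using img by simp
qed

lemma unimod_related: "unimod_equiv d P e Q \<Longrightarrow> mutation_related (d, P) (e, Q)"
  unfolding mutation_related_def mutation_step_def by simp

lemma Xs_E_lat: "t \<in> Xs n j \<Longrightarrow> E n t \<in> lattice_vecs (3 * n)"
proof -
  assume t: "t \<in> Xs n j"
  obtain a b c where abc: "t = (a, b, c)" by (cases t)
  have "inX n j a b c" using t abc by (simp add: Xs_mem)
  then have rng: "2 \<le> a \<and> a < n \<and> 1 \<le> b \<and> b < n \<and> 3 \<le> c \<and> c \<le> n" using inX_range by blast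
  show ?thesis unfolding abc by (rule E_lat) (use rng in auto)
qed

lemma B2s_E_lat: "t \<in> B2s n \<Longrightarrow> E n t \<in> lattice_vecs (3 * n)"
proof -
  assume t: "t \<in> B2s n"
  obtain a b c where abc: "t = (a, b, c)" by (cases t)
  have "inB2 n a b c" using t abc by (simp add: B2s_mem)
  then have rng: "1 \<le> a \<and> a < n \<and> 1 \<le> b \<and> b < n \<and> 3 \<le> c \<and> c \<le> n" using inB2_range by blast
  show ?thesis unfolding abc by (rule E_lat) (use rng in auto)
qed

lemma Xs_ne: "3 \<le> n \<Longrightarrow> Xs n j \<noteq> {}"
proof -
  assume "3 \<le> n"
  then have "(2, 1, 3) \<in> Xs n j" by (simp add: Xs_mem inX_def)
  then show ?thesis by blast
qed

lemma shear_first: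
  assumes n: "4 \<le> n"
  shows "mutation_related (3 * n, convex hull (E n ` Xs n 3)) (3 * n, convex hull (E n ` Xs n 4))"
proof -
  have X4: "Xs n 4 = mv 3 ` Xs n 3" using Xs_step[of 3 n] by (simp add: numeral_eq_Suc)
  have i0: "idx n 2 3 < 3 * n" using n by (intro idx_lt) auto
  have i1: "idx n 2 2 < 3 * n" using n by (intro idx_lt) auto
  have Wl: "Wc n 3 \<in> lattice_vecs (3 * n)" using n by (intro Wc_lat) auto
  have fwd: "\<forall>t\<in>Xs n 3. E n t + (E n t (idx n 2 3)) *\<^sub>R Wc n 3 = E n (mv 3 t)"
  proof
    fix t assume t: "t \<in> Xs n 3"
    obtain a b c where abc: "t = (a, b, c)" by (cases t)
    have iX: "inX n 3 a b c" using t abc by (simp add: Xs_mem)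
    have rng: "2 \<le> a \<and> a < n \<and> 1 \<le> b \<and> b < n \<and> 3 \<le> c \<and> c \<le> n" using inX_range[OF iX] by simp
    have val: "E n (a, b, c) (idx n 2 3) = (if b = 3 then 1 else 0)"
      using rng n by (intro E_at) auto
    show "E n t + (E n t (idx n 2 3)) *\<^sub>R Wc n 3 = E n (mv 3 t)"
    proof (cases "b = 3")
      case True
      then have "a = 2" using iX by (auto simp: inX_def)
      then have m: "mv 3 t = (3, 2, c)" using True abc by (simp add: mv_def)
      show ?thesis unfolding m using True abc val E_move[of n 3 c] \<open>a = 2\<close> by simp
    next
      case False
      then have m: "mv 3 t = t" using abc by (simp add: mv_def)
      show ?thesis unfolding m using False abc val by simp
    qed
  qed
  have bwd: "\<forall>t\<in>Xs n 3. E n (mv 3 t) - (E n (mv 3 t) (idx n 2 2)) *\<^sub>R Wc n 3 = E n t"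
  proof
    fix t assume t: "t \<in> Xs n 3"
    obtain a b c where abc: "t = (a, b, c)" by (cases t)
    have iX: "inX n 3 a b c" using t abc by (simp add: Xs_mem)
    have rng: "2 \<le> a \<and> a < n \<and> 1 \<le> b \<and> b < n \<and> 3 \<le> c \<and> c \<le> n" using inX_range[OF iX] by simp
    show "E n (mv 3 t) - (E n (mv 3 t) (idx n 2 2)) *\<^sub>R Wc n 3 = E n t"
    proof (cases "a = 2 \<and> b = 3")
      case True
      have v: "E n (3, 2, c) (idx n 2 2) = 1" using rng n by (subst E_at) auto
      have m: "mv 3 t = (3, 2, c)" using True abc by (simp add: mv_def)
      show ?thesis unfolding m using True abc E_move'[of n 3 c] v by simp
    next
      case False
      have b2: "b \<noteq> 2" using iX by (auto simp: inX_def)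
      have v: "E n (a, b, c) (idx n 2 2) = 0" using rng n b2 by (subst E_at) auto
      have m: "mv 3 t = t" using False abc by (simp add: mv_def)
      show ?thesis unfolding m using abc v by simp
    qed
  qed
  have "unimod_equiv (3 * n) (convex hull (E n ` Xs n 3)) (3 * n) (convex hull (E n ` mv 3 ` Xs n 3))"
  proof (rule move_shear[OF Xs_finite Xs_ne _ _ i0 i1 _ _ fwd bwd])
    show "3 \<le> n" using n by simp
    show "\<forall>t\<in>Xs n 3. E n t \<in> lattice_vecs (3 * n)" using Xs_E_lat by blast
    show "\<forall>t\<in>Xs n 3. E n (mv 3 t) \<in> lattice_vecs (3 * n)" using Xs_E_lat X4 by blast
    show "\<forall>a. Wc n 3 a \<in> \<int>" by (simp add: Wc_int)
    show "Wc n 3 \<in> vecs (3 * n)" using Wl by (rule lattice_vecs_vecs)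
  qed
  then show ?thesis using X4 by (simp add: unimod_related)
qed

lemma shear_last:
  assumes n: "3 \<le> n"
  shows "mutation_related (3 * n, convex hull (E n ` Xs n n)) (3 * n, convex hull (E n ` B2s n))"
proof -
  have i0: "idx n 1 2 < 3 * n" using n by (intro idx_lt) auto
  have i1: "idx n 1 1 < 3 * n" using n by (intro idx_lt) auto
  have Wl: "Wc n 1 \<in> lattice_vecs (3 * n)" using n by (intro Wc_lat) auto
  have fwd: "\<forall>t\<in>Xs n n. E n t + (E n t (idx n 1 2)) *\<^sub>R Wc n 1 = E n (mvL t)"
  proof
    fix t assume t: "t \<in> Xs n n"
    obtain a b c where abc: "t = (a, b, c)" by (cases t)
    have iX: "inX n n a b c" using t abc by (simp add: Xs_mem)
    have rng: "2 \<le> a \<and> a < n \<and> 1 \<le> b \<and> b < n \<and> 3 \<le> c \<and> c \<le> n" using inX_range[OF iX] by simp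
    have val: "E n (a, b, c) (idx n 1 2) = (if a = 2 then 1 else 0)"
      using rng n by (intro E_at) auto
    show "E n t + (E n t (idx n 1 2)) *\<^sub>R Wc n 1 = E n (mvL t)"
    proof (cases "a = 2")
      case True
      then have "b = 1" using iX by (auto simp: inX_def)
      then have m: "mvL t = (1, 2, c)" using True abc by (simp add: mvL_def)
      show ?thesis unfolding m using True abc val E_move[of n 1 c] \<open>b = 1\<close> by simp
    next
      case False
      then have m: "mvL t = t" using abc by (simp add: mvL_def)
      show ?thesis unfolding m using False abc val by simp
    qed
  qed
  have bwd: "\<forall>t\<in>Xs n n. E n (mvL t) - (E n (mvL t) (idx n 1 1)) *\<^sub>R Wc n 1 = E n t"
  proof
    fix t assume t: "t \<in> Xs n n"
    obtain a b c where abc: "t = (a, b, c)" by (cases t)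
    have iX: "inX n n a b c" using t abc by (simp add: Xs_mem)
    have rng: "2 \<le> a \<and> a < n \<and> 1 \<le> b \<and> b < n \<and> 3 \<le> c \<and> c \<le> n" using inX_range[OF iX] by simp
    show "E n (mvL t) - (E n (mvL t) (idx n 1 1)) *\<^sub>R Wc n 1 = E n t"
    proof (cases "a = 2 \<and> b = 1")
      case True
      have v: "E n (1, 2, c) (idx n 1 1) = 1" using rng n by (subst E_at) auto
      have m: "mvL t = (1, 2, c)" using True abc by (simp add: mvL_def)
      show ?thesis unfolding m using True abc E_move'[of n 1 c] v by simp
    next
      case False
      have v: "E n (a, b, c) (idx n 1 1) = 0" using rng n by (subst E_at) auto
      have m: "mvL t = t" using False abc by (simp add: mvL_def)
      show ?thesis unfolding m using abc v by simp
    qed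
  qed
  have "unimod_equiv (3 * n) (convex hull (E n ` Xs n n)) (3 * n) (convex hull (E n ` mvL ` Xs n n))"
  proof (rule move_shear[OF Xs_finite Xs_ne _ _ i0 i1 _ _ fwd bwd])
    show "3 \<le> n" by (rule n)
    show "\<forall>t\<in>Xs n n. E n t \<in> lattice_vecs (3 * n)" using Xs_E_lat by blast
    show "\<forall>t\<in>Xs n n. E n (mvL t) \<in> lattice_vecs (3 * n)" using B2s_E_lat B2s_step by blast
    show "\<forall>a. Wc n 1 a \<in> \<int>" by (simp add: Wc_int)
    show "Wc n 1 \<in> vecs (3 * n)" using Wl by (rule lattice_vecs_vecs)
  qed
  then show ?thesis using B2s_step[of n] by (simp add: unimod_related)
qed

lemma dm_helper:
  fixes q m s :: nat
  assumes "s < m"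
  shows "(q * m + s) div m = q" "(q * m + s) mod m = s"
proof -
  have m0: "m \<noteq> 0" using assms by simp
  show "(q * m + s) div m = q" using assms m0 by (simp add: add.commute[of "q * m"])
  show "(q * m + s) mod m = s" using assms m0 by (simp add: add.commute[of "q * m"])
qed

definition colk :: "nat \<Rightarrow> nat \<Rightarrow> nat" where "colk r c = (if r = 2 \<and> c = 3 then 2 else c)"
definition rowof :: "nat \<Rightarrow> nat \<Rightarrow> nat" where "rowof n i = i div (n - 3) + 1"
definition kap :: "nat \<Rightarrow> nat \<Rightarrow> nat" where
  "kap n i = idx n (rowof n i) (colk (rowof n i) (i mod (n - 3) + 3))"
definition kk :: "nat \<Rightarrow> nat" where "kk n = 3 * (n - 3)"
definition prj :: "nat \<Rightarrow> (nat \<Rightarrow> real) \<Rightarrow> (nat \<Rightarrow> real)" where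
  "prj n x = (\<lambda>i. if i < kk n then x (kap n i) else 0)"
definition kept :: "nat \<Rightarrow> nat \<Rightarrow> nat \<Rightarrow> bool" where
  "kept n r c \<longleftrightarrow> (r = 1 \<and> 3 \<le> c \<and> c \<le> n - 1) \<or> (r = 2 \<and> (c = 2 \<or> (4 \<le> c \<and> c \<le> n - 1)))
      \<or> (r = 3 \<and> 3 \<le> c \<and> c \<le> n - 1)"
definition encc :: "nat \<Rightarrow> nat \<Rightarrow> nat" where "encc r c = (if r = 2 \<and> c = 2 then 3 else c)"
definition pos :: "nat \<Rightarrow> nat \<Rightarrow> nat \<Rightarrow> nat" where "pos n r c = (r - 1) * (n - 3) + (encc r c - 3)"
definition dl :: "nat \<Rightarrow> nat \<Rightarrow> real" where "dl p = (\<lambda>i. if i = p then 1 else 0)"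

lemma pos_props:
  assumes n: "4 \<le> n" and k: "kept n r c"
  shows "pos n r c < kk n" "rowof n (pos n r c) = r" "pos n r c mod (n - 3) = encc r c - 3"
    "colk r (encc r c) = c" "3 \<le> encc r c"
proof -
  have e: "3 \<le> encc r c" "encc r c \<le> n - 1" using k n by (auto simp: kept_def encc_def)
  have s: "encc r c - 3 < n - 3" using e n by linarith
  have r: "r = 1 \<or> r = 2 \<or> r = 3" using k by (auto simp: kept_def)
  show "pos n r c < kk n"
    using r s by (auto simp: pos_def kk_def)
  show "rowof n (pos n r c) = r"
    using dm_helper(1)[OF s, of "r - 1"] r by (auto simp: rowof_def pos_def)
  show "pos n r c mod (n - 3) = encc r c - 3"
    using dm_helper(2)[OF s, of "r - 1"] by (simp add: pos_def)
  show "colk r (encc r c) = c" using k by (auto simp: colk_def encc_def kept_def)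
  show "3 \<le> encc r c" by (rule e(1))
qed

lemma kap_pos:
  assumes n: "4 \<le> n" and k: "kept n r c"
  shows "kap n (pos n r c) = idx n r c"
proof -
  have "encc r c - 3 + 3 = encc r c" using pos_props(5)[OF n k] by simp
  then show ?thesis using pos_props[OF n k] by (simp add: kap_def)
qed

lemma kap_range:
  assumes n: "4 \<le> n" and i: "i < kk n"
  shows "kept n (rowof n i) (colk (rowof n i) (i mod (n - 3) + 3))"
    "pos n (rowof n i) (colk (rowof n i) (i mod (n - 3) + 3)) = i"
    "1 \<le> rowof n i" "rowof n i \<le> 3"
    "1 \<le> colk (rowof n i) (i mod (n - 3) + 3)" "colk (rowof n i) (i mod (n - 3) + 3) \<le> n"
proof -
  define m where "m = n - 3"
  have m0: "0 < m" using n by (simp add: m_def)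
  define q where "q = i div m"
  define s where "s = i mod m"
  have q3: "q < 3" using i unfolding q_def kk_def m_def[symmetric] by (simp add: less_mult_imp_div_less)
  have sm: "s < m" using m0 unfolding s_def by simp
  have iqs: "i = q * m + s" unfolding q_def s_def by simp
  have ro: "rowof n i = q + 1" by (simp add: rowof_def q_def m_def)
  have so: "i mod (n - 3) = s" by (simp add: s_def m_def)
  have q: "q = 0 \<or> q = 1 \<or> q = 2" using q3 by auto
  show "1 \<le> rowof n i" "rowof n i \<le> 3" using ro q3 by auto
  show kp: "kept n (rowof n i) (colk (rowof n i) (i mod (n - 3) + 3))"
    using q sm unfolding ro so by (auto simp: kept_def colk_def m_def)
  show "1 \<le> colk (rowof n i) (i mod (n - 3) + 3)" "colk (rowof n i) (i mod (n - 3) + 3) \<le> n"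
    using sm unfolding ro so by (auto simp: colk_def m_def)
  have "encc (q + 1) (colk (q + 1) (s + 3)) = s + 3"
    by (auto simp: encc_def colk_def)
  then show "pos n (rowof n i) (colk (rowof n i) (i mod (n - 3) + 3)) = i"
    unfolding ro so pos_def using iqs by (simp add: m_def)
qed

lemma kap_eq:
  assumes n: "4 \<le> n" and i: "i < kk n" and r: "1 \<le> r" "r \<le> 3" and c: "1 \<le> c" "c \<le> n"
  shows "kap n i = idx n r c \<longleftrightarrow> kept n r c \<and> i = pos n r c"
proof
  assume eq: "kap n i = idx n r c"
  have "rowof n i = r \<and> colk (rowof n i) (i mod (n - 3) + 3) = c"
    using eq kap_range[OF n i] c r unfolding kap_def by (subst (asm) idx_inj) auto
  then show "kept n r c \<and> i = pos n r c" using kap_range(1,2)[OF n i] by auto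
next
  assume "kept n r c \<and> i = pos n r c"
  then show "kap n i = idx n r c" using kap_pos[OF n] by auto
qed

lemma kap_lt:
  assumes n: "4 \<le> n" and i: "i < kk n"
  shows "kap n i < 3 * n"
  unfolding kap_def using kap_range[OF n i] by (intro idx_lt) auto

lemma prj_add: "prj n (x + y) = prj n x + prj n y"
  by (simp add: prj_def fun_eq_iff)

lemma prj_diff: "prj n (x - y) = prj n x - prj n y"
  by (simp add: prj_def fun_eq_iff)

lemma prj_scale: "prj n (a *\<^sub>R x) = a *\<^sub>R prj n x"
  by (simp add: prj_def fun_eq_iff)

lemma prj_emat:
  assumes n: "4 \<le> n" and r: "1 \<le> r" "r \<le> 3" and c: "1 \<le> c" "c \<le> n"
  shows "prj n (emat n r c) = (if kept n r c then dl (pos n r c) else 0)"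
proof (rule ext)
  fix i
  show "prj n (emat n r c) i = (if kept n r c then dl (pos n r c) else 0) i"
  proof (cases "i < kk n")
    case True
    then show ?thesis using kap_eq[OF n True r c] by (auto simp: prj_def emat_idx dl_def)
  next
    case False
    then have "kept n r c \<Longrightarrow> i \<noteq> pos n r c" using pos_props(1)[OF n] by auto
    then show ?thesis using False by (auto simp: prj_def dl_def)
  qed
qed

lemma prj_iaff:
  assumes n: "4 \<le> n"
  shows "iaff (3 * n) (kk n) (prj n)"
  unfolding iaff_def
proof (intro exI conjI allI)
  define A where "A = (\<lambda>i a. if a = kap n i then 1 else 0 :: real)"
  show "A i a \<in> \<int>" for i a by (simp add: A_def)
  show "(\<lambda>_. 0::real) a \<in> \<int>" for a by simp
  show "prj n x = (\<lambda>i. if i < kk n then (\<lambda>_. 0) i + (\<Sum>a<3 * n. A i a * x a) else 0)" for x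
  proof (rule ext)
    fix i
    show "prj n x i = (if i < kk n then (\<lambda>_. 0) i + (\<Sum>a<3 * n. A i a * x a) else 0)"
    proof (cases "i < kk n")
      case True
      have "(\<Sum>a<3 * n. A i a * x a) = (\<Sum>a<3 * n. if a = kap n i then x a else 0)"
        by (rule sum.cong) (auto simp: A_def)
      also have "\<dots> = x (kap n i)" using kap_lt[OF n True] by (simp add: sum.delta')
      finally show ?thesis using True by (simp add: prj_def)
    qed (simp add: prj_def)
  qed
qed

definition dropc :: "nat \<Rightarrow> nat \<Rightarrow> nat" where
  "dropc n r = (if r = 1 then 2 else if r = 2 then 1 else n)"

definition Dv :: "nat \<Rightarrow> nat \<Rightarrow> (nat \<Rightarrow> real)" where
  "Dv n i = (\<lambda>a. if a = kap n i then 1 else 0) - emat n (rowof n i) (dropc n (rowof n i))"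

definition c0 :: "nat \<Rightarrow> (nat \<Rightarrow> real)" where
  "c0 n = emat n 1 2 + emat n 2 1 + emat n 3 n"

definition rc :: "nat \<Rightarrow> (nat \<Rightarrow> real) \<Rightarrow> (nat \<Rightarrow> real)" where
  "rc n y = (\<lambda>a. if a < 3 * n then c0 n a + (\<Sum>i<kk n. Dv n i a * y i) else 0)"

lemma rc_iaff: "iaff (kk n) (3 * n) (rc n)"
  unfolding iaff_def
proof (intro exI conjI allI)
  show "Dv n i a \<in> \<int>" for a i by (simp add: Dv_def emat_def)
  show "c0 n a \<in> \<int>" for a by (simp add: c0_def emat_def)
  show "rc n x = (\<lambda>a. if a < 3 * n then c0 n a + (\<Sum>i<kk n. Dv n i a * x i) else 0)" for x
    by (simp add: rc_def)
qed

lemma dropc_range: "1 \<le> r \<Longrightarrow> r \<le> 3 \<Longrightarrow> 3 \<le> n \<Longrightarrow> 1 \<le> dropc n r \<and> dropc n r \<le> n"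
  by (auto simp: dropc_def)

lemma rc_eq:
  assumes n: "4 \<le> n"
  shows "rc n y = c0 n + (\<Sum>i<kk n. y i *\<^sub>R Dv n i)"
proof (rule ext)
  fix a
  show "rc n y a = (c0 n + (\<Sum>i<kk n. y i *\<^sub>R Dv n i)) a"
  proof (cases "a < 3 * n")
    case True
    then show ?thesis by (simp add: rc_def sum_fun_apply mult.commute)
  next
    case False
    have c: "c0 n a = 0" using False idx_lt[of 1 2 n] idx_lt[of 2 1 n] idx_lt[of 3 n n] n
      by (auto simp: c0_def emat_idx)
    have d: "Dv n i a = 0" if "i < kk n" for i
    proof -
      have "kap n i < 3 * n" by (rule kap_lt[OF n that])
      moreover have "idx n (rowof n i) (dropc n (rowof n i)) < 3 * n"
        using kap_range(3,4)[OF n that] dropc_range[of "rowof n i" n] n by (intro idx_lt) auto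
      ultimately show ?thesis using False by (auto simp: Dv_def emat_idx)
    qed
    show ?thesis using False c d by (simp add: rc_def sum_fun_apply)
  qed
qed

lemma Dv_pos:
  assumes n: "4 \<le> n" and k: "kept n r c"
  shows "Dv n (pos n r c) = emat n r c - emat n r (dropc n r)"
  using kap_pos[OF n k] pos_props(2)[OF n k] by (simp add: Dv_def emat_idx)

definition Lr :: "nat \<Rightarrow> (nat \<Rightarrow> real) \<Rightarrow> (nat \<Rightarrow> real)" where
  "Lr n y = (\<Sum>i<kk n. y i *\<^sub>R Dv n i)"

lemma Lr_add: "Lr n (x + y) = Lr n x + Lr n y"
  by (simp add: Lr_def scaleR_add_left sum.distrib)

lemma Lr_zero: "Lr n 0 = 0"
  by (simp add: Lr_def)

lemma Lr_dl: "p < kk n \<Longrightarrow> Lr n (dl p) = Dv n p"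
proof -
  assume p: "p < kk n"
  have "Lr n (dl p) = (\<Sum>i<kk n. if i = p then Dv n i else 0)"
    unfolding Lr_def by (rule sum.cong) (auto simp: dl_def)
  also have "\<dots> = Dv n p" using p by (simp add: sum.delta')
  finally show ?thesis .
qed

lemma Lr_emat:
  assumes n: "4 \<le> n" and r: "1 \<le> r" "r \<le> 3" and c: "1 \<le> c" "c \<le> n"
    and v: "c = dropc n r \<or> kept n r c"
  shows "emat n r (dropc n r) + Lr n (prj n (emat n r c)) = emat n r c"
proof (cases "kept n r c")
  case True
  then show ?thesis using prj_emat[OF n r c] Lr_dl[OF pos_props(1)[OF n True]] Dv_pos[OF n True] by simp
next
  case False
  then show ?thesis using prj_emat[OF n r c] v by (simp add: Lr_zero)
qed

definition validk :: "nat \<Rightarrow> nat \<Rightarrow> nat \<Rightarrow> nat \<Rightarrow> bool" where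
  "validk n a b c \<longleftrightarrow> (a = 2 \<or> (3 \<le> a \<and> a \<le> n - 1)) \<and> (b = 1 \<or> b = 2 \<or> (4 \<le> b \<and> b \<le> n - 1))
      \<and> 3 \<le> c \<and> c \<le> n"

lemma inX_validk: "inX n j a b c \<Longrightarrow> 4 \<le> j \<Longrightarrow> validk n a b c"
  unfolding inX_def validk_def by auto

lemma prj_E:
  assumes n: "4 \<le> n"
  shows "prj n (E n (a, b, c)) = prj n (emat n 1 a) + prj n (emat n 2 b) + prj n (emat n 3 c)"
  by (simp add: E_def prj_add)

lemma rc_prj_E:
  assumes n: "4 \<le> n" and v: "validk n a b c"
  shows "rc n (prj n (E n (a, b, c))) = E n (a, b, c)"
proof -
  have va: "a = dropc n 1 \<or> kept n 1 a" "1 \<le> a" "a \<le> n" using v n by (auto simp: validk_def dropc_def kept_def)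
  have vb: "b = dropc n 2 \<or> kept n 2 b" "1 \<le> b" "b \<le> n" using v n by (auto simp: validk_def dropc_def kept_def)
  have vc: "c = dropc n 3 \<or> kept n 3 c" "1 \<le> c" "c \<le> n" using v n by (auto simp: validk_def dropc_def kept_def)
  have "rc n (prj n (E n (a, b, c))) = c0 n + Lr n (prj n (E n (a, b, c)))"
    using rc_eq[OF n] by (simp add: Lr_def)
  also have "\<dots> = (emat n 1 (dropc n 1) + Lr n (prj n (emat n 1 a)))
      + (emat n 2 (dropc n 2) + Lr n (prj n (emat n 2 b)))
      + (emat n 3 (dropc n 3) + Lr n (prj n (emat n 3 c)))"
    by (simp add: prj_E[OF n] Lr_add c0_def dropc_def algebra_simps)
  also have "\<dots> = emat n 1 a + emat n 2 b + emat n 3 c"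
    using Lr_emat[OF n _ _ va(2,3) va(1)] Lr_emat[OF n _ _ vb(2,3) vb(1)] Lr_emat[OF n _ _ vc(2,3) vc(1)]
    by simp
  finally show ?thesis by (simp add: E_def)
qed

definition fl :: "nat \<Rightarrow> nat \<Rightarrow> (nat \<Rightarrow> real)" where
  "fl n j = (\<lambda>i. if i < n - 3 then (if i + 3 \<le> j - 1 then 1 else 0)
      else if i < 2 * (n - 3) then (if i - (n - 3) + 3 \<le> j then -1 else 0) else 0)"

lemma pairing_dl: "p < k \<Longrightarrow> pairing k f (dl p) = f p"
proof -
  assume p: "p < k"
  have "pairing k f (dl p) = (\<Sum>i<k. if i = p then f i else 0)"
    unfolding pairing_def by (rule sum.cong) (auto simp: dl_def)
  also have "\<dots> = f p" using p by (simp add: sum.delta')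
  finally show ?thesis .
qed

lemma pairing_add: "pairing k f (x + y) = pairing k f x + pairing k f y"
  by (simp add: pairing_def distrib_left sum.distrib)

lemma pairing_diff: "pairing k f (x - y) = pairing k f x - pairing k f y"
  by (simp add: pairing_def right_diff_distrib sum_subtractf)

lemma pairing_zero: "pairing k f 0 = 0"
  by (simp add: pairing_def)

lemma pairing_prj_emat:
  assumes n: "4 \<le> n" and r: "1 \<le> r" "r \<le> 3" and c: "1 \<le> c" "c \<le> n"
  shows "pairing (kk n) f (prj n (emat n r c)) = (if kept n r c then f (pos n r c) else 0)"
  using prj_emat[OF n r c] pairing_dl[OF pos_props(1)[OF n]] pairing_zero by auto

lemma pos1: "4 \<le> n \<Longrightarrow> 3 \<le> a \<Longrightarrow> a \<le> n - 1 \<Longrightarrow> pos n 1 a = a - 3"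
  by (simp add: pos_def encc_def)
lemma pos22: "pos n 2 2 = n - 3"
  by (simp add: pos_def encc_def)
lemma pos2: "4 \<le> b \<Longrightarrow> pos n 2 b = (n - 3) + (b - 3)"
  by (simp add: pos_def encc_def)
lemma pos3: "pos n 3 c = 2 * (n - 3) + (c - 3)"
  by (simp add: pos_def encc_def)

definition lv :: "nat \<Rightarrow> nat \<Rightarrow> nat \<Rightarrow> real" where
  "lv j a b = (if 3 \<le> a \<and> a \<le> j - 1 then 1 else 0) - (if b = 2 \<or> (4 \<le> b \<and> b \<le> j) then 1 else 0)"

lemma ell_E:
  assumes n: "4 \<le> n" and j: "3 \<le> j" and v: "validk n a b c"
  shows "pairing (kk n) (fl n j) (prj n (E n (a, b, c))) = lv j a b"
proof -
  have ra: "1 \<le> a" "a \<le> n" and rb: "1 \<le> b" "b \<le> n" and rcc: "1 \<le> c" "c \<le> n"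
    using v n by (auto simp: validk_def)
  have pa: "pairing (kk n) (fl n j) (prj n (emat n 1 a)) = (if 3 \<le> a \<and> a \<le> j - 1 then 1 else 0)"
  proof (cases "a = 2")
    case True
    then show ?thesis using pairing_prj_emat[OF n _ _ ra] by (simp add: kept_def)
  next
    case False
    then have a3: "3 \<le> a" "a \<le> n - 1" using v by (auto simp: validk_def)
    then have "kept n 1 a" by (simp add: kept_def)
    then show ?thesis using pairing_prj_emat[OF n _ _ ra] pos1[OF n a3] a3 n by (auto simp: fl_def)
  qed
  have pb: "pairing (kk n) (fl n j) (prj n (emat n 2 b)) = - (if b = 2 \<or> (4 \<le> b \<and> b \<le> j) then 1 else 0)"
  proof -
    consider "b = 1" | "b = 2" | "4 \<le> b \<and> b \<le> n - 1" using v by (auto simp: validk_def)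
    then show ?thesis
    proof cases
      case 1
      then show ?thesis using pairing_prj_emat[OF n _ _ rb] by (simp add: kept_def)
    next
      case 2
      then show ?thesis using pairing_prj_emat[OF n _ _ rb] pos22 j n by (simp add: kept_def fl_def)
    next
      case 3
      then have "kept n 2 b" by (simp add: kept_def)
      then show ?thesis using pairing_prj_emat[OF n _ _ rb] pos2[of b n] 3 n by (auto simp: fl_def)
    qed
  qed
  have pc: "pairing (kk n) (fl n j) (prj n (emat n 3 c)) = 0"
    using pairing_prj_emat[OF n _ _ rcc] pos3[of n c] n by (auto simp: fl_def)
  show ?thesis using pa pb pc by (simp add: prj_E[OF n] pairing_add lv_def)
qed

definition Wv :: "nat \<Rightarrow> nat \<Rightarrow> (nat \<Rightarrow> real)" where "Wv n j = prj n (Wc n j)"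

lemma Wv_eq:
  assumes n: "4 \<le> n" and j: "4 \<le> j" "j \<le> n - 1"
  shows "Wv n j = dl (pos n 1 j) - dl (pos n 2 j) + dl (pos n 2 2)"
proof -
  have "Wv n j = prj n (emat n 1 j) - prj n (emat n 2 j) + prj n (emat n 2 2) - prj n (emat n 1 2)"
    by (simp add: Wv_def Wc_def prj_add prj_diff)
  also have "\<dots> = dl (pos n 1 j) - dl (pos n 2 j) + dl (pos n 2 2)"
    using prj_emat[OF n, of 1 j] prj_emat[OF n, of 2 j] prj_emat[OF n, of 2 2] prj_emat[OF n, of 1 2] n j
    by (simp add: kept_def)
  finally show ?thesis .
qed

lemma Wv_at:
  assumes n: "4 \<le> n" and j: "4 \<le> j" "j \<le> n - 1"
  shows "Wv n j (pos n 1 j) = 1"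
  using Wv_eq[OF n j] pos1[OF n, of j] pos2[OF j(1), of n] pos22[of n] n j by (simp add: dl_def)

lemma pairing_fl_Wv:
  assumes n: "4 \<le> n" and j: "4 \<le> j" "j \<le> n - 1"
  shows "pairing (kk n) (fl n j) (Wv n j) = 0"
proof -
  have k: "pos n 1 j < kk n" "pos n 2 j < kk n" "pos n 2 2 < kk n"
    using pos_props(1)[OF n] j n by (auto simp: kept_def)
  show ?thesis
    using Wv_eq[OF n j] pairing_dl[OF k(1)] pairing_dl[OF k(2)] pairing_dl[OF k(3)]
      pos1[OF n, of j] pos2[OF j(1), of n] pos22[of n] n j
    by (simp add: pairing_add pairing_diff fl_def; arith)
qed

definition phi :: "nat \<Rightarrow> nat \<Rightarrow> (nat \<Rightarrow> real) \<Rightarrow> (nat \<Rightarrow> real)" where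
  "phi n j u = u - min 0 (pairing (kk n) (fl n j) u) *\<^sub>R Wv n j"

lemma lv_vals: "lv j a b \<in> {-1, 0, 1}"
  by (auto simp: lv_def)

lemma lv_neg: "inX n j a b c \<Longrightarrow> 4 \<le> j \<Longrightarrow> lv j a b < 0 \<Longrightarrow> a = 2 \<and> b = j"
  unfolding inX_def lv_def by (auto split: if_splits)

lemma lv_pos: "inX n j a b c \<Longrightarrow> 4 \<le> j \<Longrightarrow> lv j a b = 1 \<Longrightarrow>
    3 \<le> a \<and> a \<le> j - 1 \<and> (b = 1 \<and> a < c \<and> c \<le> n \<or> j < b \<and> b < c \<and> c \<le> n)"
  unfolding inX_def lv_def by (auto split: if_splits)

lemma lv_fam: "4 \<le> j \<Longrightarrow> lv j 2 j = -1"
  by (simp add: lv_def)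

lemma phi_E:
  assumes j: "4 \<le> j" "j < n" and t: "t \<in> Xs n j"
  shows "phi n j (prj n (E n t)) = prj n (E n (mv j t))"
proof -
  have n: "4 \<le> n" using j by simp
  obtain a b c where abc: "t = (a, b, c)" by (cases t)
  have iX: "inX n j a b c" using t abc by (simp add: Xs_mem)
  have v: "validk n a b c" using inX_validk[OF iX j(1)] .
  have ell: "pairing (kk n) (fl n j) (prj n (E n (a, b, c))) = lv j a b"
    using ell_E[OF n _ v] j by simp
  show ?thesis
  proof (cases "a = 2 \<and> b = j")
    case True
    have m: "mv j t = (j, 2, c)" using True unfolding abc mv_def fst_conv snd_conv by simp
    have "phi n j (prj n (E n t)) = prj n (E n t) + Wv n j"
      using ell True lv_fam[OF j(1)] abc by (simp add: phi_def)
    also have "\<dots> = prj n (E n (2, j, c) + Wc n j)" using True abc by (simp add: Wv_def prj_add)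
    also have "\<dots> = prj n (E n (j, 2, c))" by (simp add: E_move)
    finally show ?thesis using m by simp
  next
    case False
    have m: "mv j t = t" unfolding abc mv_def fst_conv snd_conv using False by (rule if_not_P)
    have "\<not> lv j a b < 0" using lv_neg[OF iX j(1)] False by blast
    then have "min 0 (lv j a b) = 0" by simp
    then show ?thesis using ell abc m by (simp add: phi_def)
  qed
qed

lemma mid_hull: "a \<in> S \<Longrightarrow> b \<in> S \<Longrightarrow> (1/2) *\<^sub>R (a + b) \<in> convex hull S"
proof -
  assume a: "a \<in> S" and b: "b \<in> S"
  have "(1 - 1/2) *\<^sub>R a + (1/2) *\<^sub>R b \<in> convex hull S"
    by (rule convexD[OF convex_convex_hull hull_inc[OF a] hull_inc[OF b]]) auto
  then show ?thesis by (simp add: scaleR_add_right)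
qed

lemma IAH_sub_lattice:
  assumes "S \<subseteq> lattice_vecs d"
  shows "int_affine_hull S \<subseteq> lattice_vecs d"
proof
  fix x assume "x \<in> int_affine_hull S"
  then obtain T c where T: "finite T" "T \<subseteq> S" "\<forall>t\<in>T. c t \<in> \<int>" "x = (\<lambda>i. \<Sum>t\<in>T. c t * t i)"
    unfolding int_affine_hull_def by blast
  have tl: "\<forall>t\<in>T. t \<in> lattice_vecs d" using T(2) assms by blast
  have z: "\<forall>t\<in>T. \<forall>i\<ge>d. t i = 0" and ti: "\<forall>t\<in>T. \<forall>i. t i \<in> \<int>"
    using tl unfolding lattice_vecs_def vecs_def by auto
  have "\<forall>i\<ge>d. (\<Sum>t\<in>T. c t * t i) = 0" using z by (auto intro!: sum.neutral)
  moreover have "\<forall>i. (\<Sum>t\<in>T. c t * t i) \<in> \<int>" using T(3) ti by (auto intro!: Ints_sum Ints_mult)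
  ultimately show "x \<in> lattice_vecs d"
    unfolding T(4) lattice_vecs_def vecs_def by simp
qed

lemma IAH_3:
  assumes "a \<in> int_affine_hull S" "b \<in> int_affine_hull S" "z \<in> int_affine_hull S"
  shows "a - b + z \<in> int_affine_hull S"
proof -
  define c :: "nat \<Rightarrow> real" where "c i = (if i = 1 then -1 else 1)" for i
  define y where "y i = (if i = 0 then a else if i = 1 then b else z)" for i :: nat
  have "(\<lambda>l. \<Sum>i\<in>{0, 1, 2::nat}. c i * y i l) \<in> int_affine_hull S"
    by (rule IAH_comb) (use assms in \<open>auto simp: c_def y_def\<close>)
  moreover have "(\<lambda>l. \<Sum>i\<in>{0, 1, 2::nat}. c i * y i l) = a - b + z"
    by (simp add: fun_eq_iff c_def y_def)
  ultimately show ?thesis by simp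
qed

lemma prj_E_val:
  assumes n: "4 \<le> n" and r: "1 \<le> a" "a \<le> n" "1 \<le> b" "b \<le> n" "1 \<le> c" "c \<le> n"
  shows "prj n (E n (a, b, c)) = (if kept n 1 a then dl (pos n 1 a) else 0)
     + (if kept n 2 b then dl (pos n 2 b) else 0) + (if kept n 3 c then dl (pos n 3 c) else 0)"
  using prj_E[OF n] prj_emat[OF n, of 1 a] prj_emat[OF n, of 2 b] prj_emat[OF n, of 3 c] r by simp

lemma dl_in:
  assumes j: "4 \<le> j" "j < n" and p: "p < kk n"
  shows "dl p \<in> int_affine_hull (prj n ` E n ` Xs n j)"
proof -
  have n: "4 \<le> n" using j by simp
  let ?S = "prj n ` E n ` Xs n j"
  have inS: "prj n (E n t) \<in> int_affine_hull ?S" if "t \<in> Xs n j" for t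
    using that by (intro IAH_base) blast
  define r where "r = rowof n p"
  define c where "c = colk r (p mod (n - 3) + 3)"
  have kp: "kept n r c" and pp: "pos n r c = p"
    using kap_range(1,2)[OF n p] unfolding r_def c_def by auto
  have nk: "\<not> kept n 1 2" "\<not> kept n 2 1" "\<not> kept n 3 n" "kept n 1 3" "kept n 2 2"
    using n by (auto simp: kept_def)
  have o: "prj n (E n (2, 1, n)) = 0"
    using prj_E_val[OF n] nk n by simp
  have o_in: "(2, 1, n) \<in> Xs n j" using n by (simp add: Xs_mem inX_def)
  consider "r = 1" | "r = 3" | "r = 2 \<and> c = 2" | "r = 2 \<and> 4 \<le> c \<and> c \<le> n - 1"
    using kp by (auto simp: kept_def)
  then show ?thesis
  proof cases
    case 1
    then have c: "3 \<le> c" "c \<le> n - 1" using kp by (auto simp: kept_def)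
    have "prj n (E n (c, 1, n)) = dl p"
      using prj_E_val[OF n] nk n c kp 1 pp by simp
    moreover have "(c, 1, n) \<in> Xs n j" using c n by (simp add: Xs_mem inX_def)
    ultimately show ?thesis using inS by metis
  next
    case 2
    then have c: "3 \<le> c" "c \<le> n - 1" using kp by (auto simp: kept_def)
    have "prj n (E n (2, 1, c)) = dl p"
      using prj_E_val[OF n] nk n c kp 2 pp by simp
    moreover have "(2, 1, c) \<in> Xs n j" using c n by (simp add: Xs_mem inX_def)
    ultimately show ?thesis using inS by metis
  next
    case 3
    have e1: "prj n (E n (3, 2, n)) = dl (pos n 1 3) + dl p"
      using prj_E_val[OF n] nk n 3 pp by simp
    have e2: "prj n (E n (3, 1, n)) = dl (pos n 1 3)"
      using prj_E_val[OF n] nk n by simp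
    have m1: "(3, 2, n) \<in> Xs n j" "(3, 1, n) \<in> Xs n j" using n j by (auto simp: Xs_mem inX_def)
    have "prj n (E n (3, 2, n)) - prj n (E n (3, 1, n)) + prj n (E n (2, 1, n)) \<in> int_affine_hull ?S"
      by (rule IAH_3) (use inS m1 o_in in auto)
    moreover have "prj n (E n (3, 2, n)) - prj n (E n (3, 1, n)) + prj n (E n (2, 1, n)) = dl p"
      using e1 e2 o by simp
    ultimately show ?thesis by simp
  next
    case 4
    have "prj n (E n (3, c, n)) = (if kept n 1 3 then dl (pos n 1 3) else 0)
       + (if kept n 2 c then dl (pos n 2 c) else 0) + (if kept n 3 n then dl (pos n 3 n) else 0)"
      by (rule prj_E_val[OF n]) (use 4 n in auto)
    then have e1: "prj n (E n (3, c, n)) = dl (pos n 1 3) + dl p"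
      using nk 4 pp kp by simp
    have e2: "prj n (E n (3, 1, n)) = dl (pos n 1 3)"
      using prj_E_val[OF n] nk n by simp
    have m1: "(3, c, n) \<in> Xs n j" "(3, 1, n) \<in> Xs n j" using n j 4 by (auto simp: Xs_mem inX_def)
    have "prj n (E n (3, c, n)) - prj n (E n (3, 1, n)) + prj n (E n (2, 1, n)) \<in> int_affine_hull ?S"
      by (rule IAH_3) (use inS m1 o_in in auto)
    moreover have "prj n (E n (3, c, n)) - prj n (E n (3, 1, n)) + prj n (E n (2, 1, n)) = dl p"
      using e1 e2 o by simp
    ultimately show ?thesis by simp
  qed
qed

lemma prj_origin: "4 \<le> n \<Longrightarrow> prj n (E n (2, 1, n)) = 0"
proof -
  assume n: "4 \<le> n"
  have nk: "\<not> kept n 1 2" "\<not> kept n 2 1" "\<not> kept n 3 n" using n by (auto simp: kept_def)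
  have "prj n (E n (2, 1, n)) = (if kept n 1 2 then dl (pos n 1 2) else 0)
       + (if kept n 2 1 then dl (pos n 2 1) else 0) + (if kept n 3 n then dl (pos n 3 n) else 0)"
    by (rule prj_E_val[OF n]) (use n in auto)
  then show ?thesis using nk by simp
qed

lemma V_lat:
  assumes n: "4 \<le> n"
  shows "prj n ` E n ` Xs n j \<subseteq> lattice_vecs (kk n)"
  using iaff_lattice[OF prj_iaff[OF n]] Xs_E_lat by blast

lemma span_lat:
  assumes j: "4 \<le> j" "j < n"
  shows "spanned_lattice (kk n) (convex hull (prj n ` E n ` Xs n j)) = lattice_vecs (kk n)"
proof
  have n: "4 \<le> n" using j by simp
  let ?V = "prj n ` E n ` Xs n j"
  let ?P = "convex hull ?V"
  show "spanned_lattice (kk n) ?P \<subseteq> lattice_vecs (kk n)"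
    unfolding spanned_lattice_def by (rule IAH_sub_lattice) auto
  show "lattice_vecs (kk n) \<subseteq> spanned_lattice (kk n) ?P"
  proof
    fix x assume x: "x \<in> lattice_vecs (kk n)"
    have xi: "\<forall>i. x i \<in> \<int>" and xv: "\<forall>i\<ge>kk n. x i = 0" using x unfolding lattice_vecs_def vecs_def by auto
    have sub: "int_affine_hull ?V \<subseteq> spanned_lattice (kk n) ?P"
      unfolding spanned_lattice_def using V_lat[OF n, of j] hull_subset[of ?V convex]
      by (intro IAH_mono) auto
    define c where "c i = (if i < kk n then x i else 1 - (\<Sum>l<kk n. x l))" for i
    define y where "y i = (if i < kk n then dl i else 0)" for i
    have o: "(0::nat \<Rightarrow> real) \<in> int_affine_hull ?V"
    proof -
      have "(2, 1, n) \<in> Xs n j" using n by (simp add: Xs_mem inX_def)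
      then have "prj n (E n (2, 1, n)) \<in> ?V" by blast
      then have "prj n (E n (2, 1, n)) \<in> int_affine_hull ?V" by (rule IAH_base)
      then show ?thesis using prj_origin[OF n] by simp
    qed
    have "(\<lambda>l. \<Sum>i<Suc (kk n). c i * y i l) \<in> int_affine_hull ?V"
    proof (rule IAH_comb)
      show "finite {..<Suc (kk n)}" by simp
      show "\<forall>i\<in>{..<Suc (kk n)}. c i \<in> \<int>" using xi by (auto simp: c_def intro!: Ints_diff Ints_sum)
      show "sum c {..<Suc (kk n)} = 1" by (simp add: c_def)
      show "\<forall>i\<in>{..<Suc (kk n)}. y i \<in> int_affine_hull ?V"
        using dl_in[OF j] o by (auto simp: y_def)
    qed
    moreover have "(\<lambda>l. \<Sum>i<Suc (kk n). c i * y i l) = x"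
    proof (rule ext)
      fix l
      have "(\<Sum>i<Suc (kk n). c i * y i l) = (\<Sum>i<kk n. c i * y i l)" by (simp add: y_def)
      also have "\<dots> = (\<Sum>i<kk n. if i = l then x i else 0)"
        by (rule sum.cong) (auto simp: c_def y_def dl_def)
      also have "\<dots> = x l" using xv by (auto simp: sum.delta')
      finally show "(\<Sum>i<Suc (kk n). c i * y i l) = x l" .
    qed
    ultimately show "x \<in> spanned_lattice (kk n) ?P" using sub by auto
  qed
qed

lemma eid1: "E n (a, 1, g) + E n (2, j, c) = E n (2, 1, g) + E n (a, j, c)"
  by (simp add: E_def algebra_simps)
lemma eid2: "E n (a, b, g) + E n (2, j, c) = E n (a, j, c) + E n (2, b, g)"
  by (simp add: E_def algebra_simps)
lemma eid3: "E n (a, 1, g) + E n (j, 2, c) = E n (a, 2, g) + E n (j, 1, c)"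
  by (simp add: E_def algebra_simps)
lemma eid4: "E n (a, b, g) + E n (j, 2, c) = E n (a, 2, c) + E n (j, b, g)"
  by (simp add: E_def algebra_simps)

lemma fl_lat: "fl n j \<in> lattice_vecs (kk n)"
  unfolding lattice_vecs_def vecs_def fl_def kk_def by auto

lemma comb_step:
  assumes j: "4 \<le> j" "j < n"
  shows "comb_mutation (kk n) (convex hull (prj n ` E n ` Xs n j)) (convex hull (prj n ` E n ` Xs n (Suc j)))"
proof -
  have n: "4 \<le> n" using j by simp
  let ?V = "prj n ` E n ` Xs n j"
  have phiV: "phi n j ` ?V = prj n ` E n ` Xs n (Suc j)"
  proof -
    have "phi n j ` ?V = prj n ` E n ` mv j ` Xs n j"
      by (simp add: image_image phi_E[OF j] cong: image_cong)
    then show ?thesis using Xs_step[of j n] j by simp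
  qed
  have phieq: "(\<lambda>u. u - min 0 (pairing (kk n) (fl n j) u) *\<^sub>R Wv n j) = phi n j"
    by (rule ext) (simp add: phi_def)
  have ellV: "pairing (kk n) (fl n j) (prj n (E n (a, b, c))) = lv j a b" if "inX n j a b c" for a b c
    using ell_E[OF n _ inX_validk[OF that j(1)]] j by simp
  have fam: "\<exists>c'. t = (2, j, c') \<and> j < c' \<and> c' \<le> n"
    if "t \<in> Xs n j" "pairing (kk n) (fl n j) (prj n (E n t)) = -1" for t
  proof -
    obtain a b c where abc: "t = (a, b, c)" by (cases t)
    have iX: "inX n j a b c" using that(1) abc by (simp add: Xs_mem)
    have "lv j a b < 0" using that(2) ellV[OF iX] abc by simp
    then have "a = 2 \<and> b = j" using lv_neg[OF iX j(1)] by blast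
    then show ?thesis using iX abc j by (auto simp: inX_def)
  qed
  have pl: "\<exists>a b g. t = (a, b, g) \<and> 3 \<le> a \<and> a \<le> j - 1 \<and> (b = 1 \<and> a < g \<and> g \<le> n \<or> j < b \<and> b < g \<and> g \<le> n)"
    if "t \<in> Xs n j" "pairing (kk n) (fl n j) (prj n (E n t)) = 1" for t
  proof -
    obtain a b c where abc: "t = (a, b, c)" by (cases t)
    have iX: "inX n j a b c" using that(1) abc by (simp add: Xs_mem)
    have "lv j a b = 1" using that(2) ellV[OF iX] abc by simp
    then show ?thesis using lv_pos[OF iX j(1)] abc by blast
  qed
  have "comb_mutation (kk n) (convex hull ?V)
      (convex hull ((\<lambda>u. u - min 0 (pairing (kk n) (fl n j) u) *\<^sub>R Wv n j) ` ?V))"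
  proof (rule comb_mut_intro)
    show "finite ?V" using Xs_finite by simp
    show "?V \<noteq> {}" using Xs_ne[of n j] n by simp
    show "?V \<subseteq> lattice_vecs (kk n)" by (rule V_lat[OF n])
    show "(\<lambda>_. 0) \<in> ?V"
    proof -
      have "(2, 1, n) \<in> Xs n j" using n by (simp add: Xs_mem inX_def)
      then have "prj n (E n (2, 1, n)) \<in> ?V" by (intro imageI)
      moreover have "prj n (E n (2, 1, n)) = (\<lambda>_. 0)" using prj_origin[OF n] by (simp add: zero_fun_def)
      ultimately show ?thesis by simp
    qed
    show "fl n j \<in> lattice_vecs (kk n)" by (rule fl_lat)
    show "Wv n j \<in> lattice_vecs (kk n)"
      unfolding Wv_def using j by (intro iaff_lattice[OF prj_iaff[OF n]] Wc_lat) auto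
    show "Wv n j (pos n 1 j) = 1" using Wv_at[OF n] j by simp
    show "pairing (kk n) (fl n j) (Wv n j) = 0" using pairing_fl_Wv[OF n] j by simp
    show "\<forall>v\<in>?V. pairing (kk n) (fl n j) v \<in> {-1,0,1}"
    proof
      fix v assume "v \<in> ?V"
      then obtain t where t: "t \<in> Xs n j" and v: "v = prj n (E n t)" by blast
      obtain a b c where abc: "t = (a, b, c)" by (cases t)
      have iX: "inX n j a b c" using t abc by (simp add: Xs_mem)
      show "pairing (kk n) (fl n j) v \<in> {-1,0,1}" using ellV[OF iX] lv_vals v abc by simp
    qed
    show "\<forall>p\<in>?V. \<forall>q\<in>?V. pairing (kk n) (fl n j) p = 1 \<longrightarrow> pairing (kk n) (fl n j) q = -1 \<longrightarrow>
        (1/2) *\<^sub>R (p + q) \<in> convex hull ((\<lambda>u. u - min 0 (pairing (kk n) (fl n j) u) *\<^sub>R Wv n j) ` ?V)"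
    proof (intro ballI impI)
      fix p q assume p: "p \<in> ?V" and q: "q \<in> ?V" and lp: "pairing (kk n) (fl n j) p = 1"
        and lq: "pairing (kk n) (fl n j) q = -1"
      obtain tp where tp: "tp \<in> Xs n j" "p = prj n (E n tp)" using p by blast
      obtain tq where tq: "tq \<in> Xs n j" "q = prj n (E n tq)" using q by blast
      obtain c' where c': "tq = (2, j, c')" "j < c'" "c' \<le> n" using fam[OF tq(1)] lq tq(2) by blast
      obtain a b g where abg: "tp = (a, b, g)" "3 \<le> a" "a \<le> j - 1"
          "b = 1 \<and> a < g \<and> g \<le> n \<or> j < b \<and> b < g \<and> g \<le> n"
        using pl[OF tp(1)] lp tp(2) by blast
      let ?W = "prj n ` E n ` Xs n (Suc j)"
      have "\<exists>x y. x \<in> Xs n (Suc j) \<and> y \<in> Xs n (Suc j) \<and> E n tp + E n tq = E n x + E n y"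
      proof (cases "b = 1")
        case True
        have "(2, 1, g) \<in> Xs n (Suc j)" "(a, j, c') \<in> Xs n (Suc j)"
          using abg c' True j by (auto simp: Xs_mem inX_def)
        moreover have "E n tp + E n tq = E n (2, 1, g) + E n (a, j, c')"
          using abg(1) c'(1) True eid1 by simp
        ultimately show ?thesis by blast
      next
        case False
        then have b: "j < b \<and> b < g \<and> g \<le> n" using abg(4) by simp
        have "(a, j, c') \<in> Xs n (Suc j)" "(2, b, g) \<in> Xs n (Suc j)"
          using abg c' b j by (auto simp: Xs_mem inX_def)
        moreover have "E n tp + E n tq = E n (a, j, c') + E n (2, b, g)"
          using abg(1) c'(1) eid2 by simp
        ultimately show ?thesis by blast
      qed
      then obtain x y where xy: "x \<in> Xs n (Suc j)" "y \<in> Xs n (Suc j)" "E n tp + E n tq = E n x + E n y"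
        by blast
      have pq: "p + q = prj n (E n x) + prj n (E n y)"
        using tp(2) tq(2) xy(3) by (simp flip: prj_add)
      have "prj n (E n x) \<in> ?W" "prj n (E n y) \<in> ?W" using xy by auto
      then have "(1/2) *\<^sub>R (prj n (E n x) + prj n (E n y)) \<in> convex hull ?W" by (rule mid_hull)
      then have "(1/2) *\<^sub>R (p + q) \<in> convex hull ?W" unfolding pq .
      then show "(1/2) *\<^sub>R (p + q) \<in> convex hull ((\<lambda>u. u - min 0 (pairing (kk n) (fl n j) u) *\<^sub>R Wv n j) ` ?V)"
        unfolding phieq phiV .
    qed
    show "\<forall>p\<in>?V. \<forall>q\<in>?V. pairing (kk n) (fl n j) p = 1 \<longrightarrow> pairing (kk n) (fl n j) q = -1 \<longrightarrow>
        (1/2) *\<^sub>R (p + (q - min 0 (pairing (kk n) (fl n j) q) *\<^sub>R Wv n j)) \<in> convex hull ?V"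
    proof (intro ballI impI)
      fix p q assume p: "p \<in> ?V" and q: "q \<in> ?V" and lp: "pairing (kk n) (fl n j) p = 1"
        and lq: "pairing (kk n) (fl n j) q = -1"
      obtain tp where tp: "tp \<in> Xs n j" "p = prj n (E n tp)" using p by blast
      obtain tq where tq: "tq \<in> Xs n j" "q = prj n (E n tq)" using q by blast
      obtain c' where c': "tq = (2, j, c')" "j < c'" "c' \<le> n" using fam[OF tq(1)] lq tq(2) by blast
      obtain a b g where abg: "tp = (a, b, g)" "3 \<le> a" "a \<le> j - 1"
          "b = 1 \<and> a < g \<and> g \<le> n \<or> j < b \<and> b < g \<and> g \<le> n"
        using pl[OF tp(1)] lp tp(2) by blast
      have qm: "q - min 0 (pairing (kk n) (fl n j) q) *\<^sub>R Wv n j = prj n (E n (j, 2, c'))"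
      proof -
        have "q - min 0 (pairing (kk n) (fl n j) q) *\<^sub>R Wv n j = q + Wv n j" using lq by simp
        also have "\<dots> = prj n (E n (2, j, c') + Wc n j)" using tq(2) c'(1) by (simp add: Wv_def prj_add)
        also have "\<dots> = prj n (E n (j, 2, c'))" by (simp add: E_move)
        finally show ?thesis .
      qed
      have "\<exists>x y. x \<in> Xs n j \<and> y \<in> Xs n j \<and> E n tp + E n (j, 2, c') = E n x + E n y"
      proof (cases "b = 1")
        case True
        have "(a, 2, g) \<in> Xs n j" "(j, 1, c') \<in> Xs n j"
          using abg c' True j by (auto simp: Xs_mem inX_def)
        moreover have "E n tp + E n (j, 2, c') = E n (a, 2, g) + E n (j, 1, c')"
          using abg(1) True eid3 by simp
        ultimately show ?thesis by blast
      next
        case False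
        then have b: "j < b \<and> b < g \<and> g \<le> n" using abg(4) by simp
        have "(a, 2, c') \<in> Xs n j" "(j, b, g) \<in> Xs n j"
          using abg c' b j by (auto simp: Xs_mem inX_def)
        moreover have "E n tp + E n (j, 2, c') = E n (a, 2, c') + E n (j, b, g)"
          using abg(1) eid4 by simp
        ultimately show ?thesis by blast
      qed
      then obtain x y where xy: "x \<in> Xs n j" "y \<in> Xs n j" "E n tp + E n (j, 2, c') = E n x + E n y"
        by blast
      have pq: "p + prj n (E n (j, 2, c')) = prj n (E n x) + prj n (E n y)"
        using tp(2) xy(3) by (simp flip: prj_add)
      have "prj n (E n x) \<in> ?V" "prj n (E n y) \<in> ?V" using xy by auto
      then have "(1/2) *\<^sub>R (prj n (E n x) + prj n (E n y)) \<in> convex hull ?V" by (rule mid_hull)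
      then have "(1/2) *\<^sub>R (p + prj n (E n (j, 2, c'))) \<in> convex hull ?V" unfolding pq .
      then show "(1/2) *\<^sub>R (p + (q - min 0 (pairing (kk n) (fl n j) q) *\<^sub>R Wv n j)) \<in> convex hull ?V"
        using qm by simp
    qed
  qed
  then show ?thesis unfolding phieq phiV .
qed

lemma mut_step:
  assumes j: "4 \<le> j" "j < n"
  shows "mutation_related (3 * n, convex hull (E n ` Xs n j)) (3 * n, convex hull (E n ` Xs n (Suc j)))"
proof -
  have n: "4 \<le> n" using j by simp
  have rcp: "rc n (prj n (E n t)) = E n t" if "t \<in> Xs n i" "4 \<le> i" for t i
  proof -
    obtain a b c where abc: "t = (a, b, c)" by (cases t)
    have "inX n i a b c" using that(1) abc by (simp add: Xs_mem)
    then show ?thesis using rc_prj_E[OF n inX_validk] that(2) abc by simp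
  qed
  have U1: "unimod_equiv (3 * n) (convex hull (E n ` Xs n j)) (kk n) (convex hull (prj n ` E n ` Xs n j))"
  proof (rule unimod_A[OF _ _ _ prj_iaff[OF n] rc_iaff])
    show "finite (E n ` Xs n j)" using Xs_finite by simp
    show "E n ` Xs n j \<noteq> {}" using Xs_ne[of n j] n by simp
    show "E n ` Xs n j \<subseteq> lattice_vecs (3 * n)" using Xs_E_lat by blast
    show "\<forall>v\<in>E n ` Xs n j. rc n (prj n v) = v" using rcp j by blast
  qed
  have U2: "unimod_equiv (kk n) (convex hull (prj n ` E n ` Xs n (Suc j))) (3 * n) (convex hull (E n ` Xs n (Suc j)))"
  proof -
    have "unimod_equiv (kk n) (convex hull (prj n ` E n ` Xs n (Suc j))) (3 * n)
        (convex hull (rc n ` prj n ` E n ` Xs n (Suc j)))"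
    proof (rule unimod_A[OF _ _ _ rc_iaff prj_iaff[OF n]])
      show "finite (prj n ` E n ` Xs n (Suc j))" using Xs_finite by simp
      show "prj n ` E n ` Xs n (Suc j) \<noteq> {}" using Xs_ne[of n "Suc j"] n by simp
      show "prj n ` E n ` Xs n (Suc j) \<subseteq> lattice_vecs (kk n)" by (rule V_lat[OF n])
      show "\<forall>v\<in>prj n ` E n ` Xs n (Suc j). prj n (rc n v) = v" using rcp j by auto
    qed
    moreover have "rc n ` prj n ` E n ` Xs n (Suc j) = E n ` Xs n (Suc j)"
      using rcp j by (simp add: image_image cong: image_cong)
    ultimately show ?thesis by simp
  qed
  show ?thesis
    unfolding mutation_related_def mutation_step_def fst_conv snd_conv
    using U1 span_lat[OF j] comb_step[OF j] U2 by blast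
qed

lemma chain:
  assumes n: "4 \<le> n"
  shows "mutation_related\<^sup>*\<^sup>* (3 * n, convex hull (E n ` Xs n 4)) (3 * n, convex hull (E n ` Xs n n))"
proof -
  have "\<forall>j. 4 \<le> j \<longrightarrow> j \<le> n \<longrightarrow>
      mutation_related\<^sup>*\<^sup>* (3 * n, convex hull (E n ` Xs n 4)) (3 * n, convex hull (E n ` Xs n j))"
  proof (intro allI impI)
    fix j :: nat assume "4 \<le> j" "j \<le> n"
    then show "mutation_related\<^sup>*\<^sup>* (3 * n, convex hull (E n ` Xs n 4)) (3 * n, convex hull (E n ` Xs n j))"
    proof (induction j rule: dec_induct)
      case base
      then show ?case by simp
    next
      case (step m)
      then have "mutation_related\<^sup>*\<^sup>* (3 * n, convex hull (E n ` Xs n 4)) (3 * n, convex hull (E n ` Xs n m))"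
        by simp
      moreover have "mutation_related (3 * n, convex hull (E n ` Xs n m)) (3 * n, convex hull (E n ` Xs n (Suc m)))"
        using mut_step step by simp
      ultimately show ?case by (rule rtranclp.rtrancl_into_rtrancl)
    qed
  qed
  then show ?thesis using n by simp
qed

theorem theorem3p5:
  fixes n :: nat
  assumes "n \<ge> 3"
  shows "mutation_sequence (3 * n) (mf_polytope n (block_diag 1)) (3 * n) (mf_polytope n (block_diag 2))"
proof -
  have last: "mutation_related (3 * n, convex hull (E n ` Xs n n)) (3 * n, convex hull (E n ` B2s n))"
    using shear_last assms by simp
  have "mutation_related\<^sup>*\<^sup>* (3 * n, convex hull (E n ` Xs n 3)) (3 * n, convex hull (E n ` Xs n n))"
  proof (cases "n = 3")
    case True
    then show ?thesis by simp
  next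
    case False
    then have n: "4 \<le> n" using assms by simp
    have "mutation_related (3 * n, convex hull (E n ` Xs n 3)) (3 * n, convex hull (E n ` Xs n 4))"
      by (rule shear_first[OF n])
    then show ?thesis using chain[OF n] by (rule converse_rtranclp_into_rtranclp)
  qed
  then have "mutation_related\<^sup>*\<^sup>* (3 * n, convex hull (E n ` Xs n 3)) (3 * n, convex hull (E n ` B2s n))"
    using last by (rule rtranclp.rtrancl_into_rtrancl)
  then show ?thesis unfolding mutation_sequence_def mf_B1 mf_B2 .
qed

end
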